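(* Let $\sigma>0$, $\Omega=[-1,1]^n$, $K(x,y)=e^{-\sigma^2\|x-y\|^2}$, and let $\{\lambda_i\}$ be the eigenvalues (nonincreasing, with multiplicity) of $T[\phi](x)=\int_\Omega K(x,y)\phi(y)\,dy$ on $L_2(\Omega)$ (Lebesgue measure). Then for every fixed $\theta\in(0,\frac12)$, $$\mathcal{E}(\varepsilon,\{\lambda_i\}_{i=1}^\infty)+m_{(1-\theta)\varepsilon}\ln\frac{3}{\theta}=O\Big(\frac{\ln^{n+1}(1/\varepsilon)}{(\ln\ln(1/\varepsilon))^n}\Big)\quad(\varepsilon\to0^+),$$ and consequently $\mathcal{H}(\varepsilon,B_{\mathcal{H}_K},C(\Omega))=O\Big(\frac{\ln^{n+1}(1/\varepsilon)}{(\ln\ln(1/\varepsilon))^n}\Big)$.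
   Context: $\mathcal{E}(\varepsilon,\{\lambda_i\}_{i=1}^\infty)=\sum_{i:\lambda_i>\varepsilon}\ln(\lambda_i/\varepsilon)$ and $m_\varepsilon=|\{i:\lambda_i>\varepsilon\}|$. $\mathcal{H}_K$ is the RKHS of $K$, $B_{\mathcal{H}_K}$ its open unit ball viewed in $C(\Omega)$ with sup norm, and $\mathcal{H}(\varepsilon,A,X)$ is the natural log of the minimal number of balls $c+\varepsilon B_X$, $c\in X$, covering $A$. *)

theory Defs
  imports "HOL-Analysis.Analysis"
begin

definition cube :: "(real^'n) set" where
  "cube = {x. \<forall>i. - 1 \<le> x $ i \<and> x $ i \<le> 1}"

definition gaussK :: "real \<Rightarrow> real^'n \<Rightarrow> real^'n \<Rightarrow> real" where
  "gaussK \<sigma> x y = exp (- (\<sigma>\<^sup>2) * (norm (x - y))\<^sup>2)"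

definition intop :: "(real^'n \<Rightarrow> real^'n \<Rightarrow> real) \<Rightarrow> (real^'n) set
                     \<Rightarrow> (real^'n \<Rightarrow> real) \<Rightarrow> real^'n \<Rightarrow> real" where
  "intop K \<Omega> \<phi> x = (LINT y | lebesgue_on \<Omega>. K x y * \<phi> y)"

definition L2_on :: "(real^'n) set \<Rightarrow> (real^'n \<Rightarrow> real) \<Rightarrow> bool" where
  "L2_on \<Omega> \<phi> \<longleftrightarrow> \<phi> \<in> borel_measurable (lebesgue_on \<Omega>)
                  \<and> integrable (lebesgue_on \<Omega>) (\<lambda>x. (\<phi> x)\<^sup>2)"

definition has_k_orth_eigenfuns ::
  "(real^'n \<Rightarrow> real^'n \<Rightarrow> real) \<Rightarrow> (real^'n) set \<Rightarrow> real \<Rightarrow> nat \<Rightarrow> bool" where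
  "has_k_orth_eigenfuns K \<Omega> \<mu> k \<longleftrightarrow>
     (\<exists>\<phi> :: nat \<Rightarrow> real^'n \<Rightarrow> real.
        (\<forall>j<k. L2_on \<Omega> (\<phi> j)
               \<and> (AE x in lebesgue_on \<Omega>. intop K \<Omega> (\<phi> j) x = \<mu> * \<phi> j x))
      \<and> (\<forall>j<k. \<forall>l<k. (LINT x | lebesgue_on \<Omega>. \<phi> j x * \<phi> l x)
                        = (if j = l then 1 else 0)))"

text \<open>lam is the sequence of (positive) eigenvalues of T, nonincreasing and repeated
  according to multiplicity (padded with zeros if there are only finitely many).\<close>
definition eigenvalue_seq ::
  "(real^'n \<Rightarrow> real^'n \<Rightarrow> real) \<Rightarrow> (real^'n) set \<Rightarrow> (nat \<Rightarrow> real) \<Rightarrow> bool" where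
  "eigenvalue_seq K \<Omega> lam \<longleftrightarrow>
     antimono lam \<and> (\<forall>i. lam i \<ge> 0) \<and>
     (\<forall>\<mu>>0. finite {i. lam i = \<mu>} \<and>
            (\<forall>k. has_k_orth_eigenfuns K \<Omega> \<mu> k \<longleftrightarrow> k \<le> card {i. lam i = \<mu>}))"

definition Ecal :: "real \<Rightarrow> (nat \<Rightarrow> real) \<Rightarrow> real" where
  "Ecal \<epsilon> lam = (\<Sum>i\<in>{i. lam i > \<epsilon>}. ln (lam i / \<epsilon>))"

definition mcount :: "real \<Rightarrow> (nat \<Rightarrow> real) \<Rightarrow> nat" where
  "mcount \<epsilon> lam = card {i. lam i > \<epsilon>}"

text \<open>RKHS via the Moore-Aronszajn construction. A finite combination
  sum_j c_j K(., x_j) is represented by a list of pairs (c_j, x_j).\<close>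
definition kev :: "(real^'n \<Rightarrow> real^'n \<Rightarrow> real) \<Rightarrow> (real \<times> (real^'n)) list \<Rightarrow> real^'n \<Rightarrow> real" where
  "kev K ps z = sum_list (map (\<lambda>(c, x). c * K x z) ps)"

definition knorm :: "(real^'n \<Rightarrow> real^'n \<Rightarrow> real) \<Rightarrow> (real \<times> (real^'n)) list \<Rightarrow> real" where
  "knorm K ps = sqrt (sum_list (map (\<lambda>(c, x). sum_list (map (\<lambda>(d, y). c * d * K x y) ps)) ps))"

definition kdiff :: "(real \<times> (real^'n)) list \<Rightarrow> (real \<times> (real^'n)) list \<Rightarrow> (real \<times> (real^'n)) list" where
  "kdiff ps qs = ps @ map (\<lambda>(c, x). (- c, x)) qs"

text \<open>Open unit ball of H_K (functions considered on Omega): f is the pointwise limit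
  on Omega of an H_K-Cauchy sequence of finite kernel combinations centred in Omega, and
  its H_K norm (the limit of the norms) is < 1.\<close>
definition rkhs_ball :: "(real^'n \<Rightarrow> real^'n \<Rightarrow> real) \<Rightarrow> (real^'n) set \<Rightarrow> (real^'n \<Rightarrow> real) set" where
  "rkhs_ball K \<Omega> = {f. \<exists>(ps :: nat \<Rightarrow> (real \<times> (real^'n)) list) r.
       (\<forall>k. \<forall>p\<in>set (ps k). snd p \<in> \<Omega>)
     \<and> (\<forall>e>0. \<exists>N. \<forall>k\<ge>N. \<forall>l\<ge>N. knorm K (kdiff (ps k) (ps l)) < e)
     \<and> (\<forall>z\<in>\<Omega>. (\<lambda>k. kev K (ps k) z) \<longlonglongrightarrow> f z)
     \<and> (\<lambda>k. knorm K (ps k)) \<longlonglongrightarrow> r \<and> r < 1}"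

text \<open>Metric entropy H(eps, A, C(Omega)): ln of the minimal number of open sup-norm
  balls of radius eps with centres in C(Omega) covering A.\<close>
definition entropy_C :: "real \<Rightarrow> (real^'n \<Rightarrow> real) set \<Rightarrow> (real^'n) set \<Rightarrow> real" where
  "entropy_C \<epsilon> A \<Omega> = ln (real (LEAST N. \<exists>C. finite C \<and> card C = N
       \<and> (\<forall>c\<in>C. continuous_on \<Omega> c)
       \<and> (\<forall>f\<in>A. \<exists>c\<in>C. \<exists>\<delta><\<epsilon>. \<forall>x\<in>\<Omega>. \<bar>f x - c x\<bar> \<le> \<delta>)))"

end

theory Submission
  imports Defs "HOL-Real_Asymp.Real_Asymp"
begin

lemma cube_cbox: "(cube :: (real^'n) set) = cbox (-1) 1"
  unfolding cube_def by (auto simp: mem_box_cart)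

lemma cube_lmeas: "(cube :: (real^'n) set) \<in> lmeasurable"
  by (simp add: cube_cbox)

lemma fm_cube: "finite_measure (lebesgue_on (cube :: (real^'n) set))"
  by (rule finite_measure_lebesgue_on[OF cube_lmeas])

lemma space_cube: "space (lebesgue_on (cube :: (real^'n) set)) = cube"
  by simp

lemma measure_cube: "measure (lebesgue_on (cube :: (real^'n) set)) cube = 2 ^ CARD('n)"
proof -
  have "measure (lebesgue_on (cube :: (real^'n) set)) cube = measure lebesgue (cube:: (real^'n) set)"
    by (subst measure_restrict_space) (auto simp: cube_cbox)
  also have "\<dots> = Henstock_Kurzweil_Integration.content (cbox (-1::real^'n) 1)" by (simp add: cube_cbox)
  also have "\<dots> = 2 ^ CARD('n)"
  proof -
    have "(0::real^'n) \<in> cbox (-1) 1" by (simp add: mem_box_cart)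
    then show ?thesis by (subst content_cbox_cart) auto
  qed
  finally show ?thesis .
qed

lemma cont_meas: 
  fixes f :: "real^'n \<Rightarrow> real"
  assumes "continuous_on UNIV f"
  shows "f \<in> borel_measurable (lebesgue_on cube)"
  using assms  by (meson continuous_imp_measurable_on_sets_lebesgue continuous_on_subset subset_UNIV cube_lmeas fmeasurableD)

definition ee :: "real \<Rightarrow> real^'n \<Rightarrow> real" where "ee \<sigma> x = exp (- (\<sigma>\<^sup>2) * (norm x)\<^sup>2)"
definition monm :: "real^'n \<Rightarrow> (nat \<Rightarrow> 'n) \<Rightarrow> nat \<Rightarrow> real" where "monm x s k = (\<Prod>m<k. x $ s m)"
definition SS :: "nat \<Rightarrow> (nat \<Rightarrow> 'n) set" where "SS k = PiE {..<k} (\<lambda>_. UNIV)"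
definition ak :: "real \<Rightarrow> nat \<Rightarrow> real" where "ak \<sigma> k = (2*\<sigma>\<^sup>2)^k / fact k"

lemma finite_SS[simp]: "finite (SS k :: (nat \<Rightarrow> 'n::finite) set)"
  unfolding SS_def by (simp add: finite_PiE)

lemma card_SS: "card (SS k :: (nat \<Rightarrow> 'n::finite) set) = CARD('n) ^ k"
  unfolding SS_def by (simp add: card_PiE)

lemma ak_pos: "ak \<sigma> k \<ge> 0" unfolding ak_def by simp

lemma inner_pow: "((x::real^'n) \<bullet> y) ^ k = (\<Sum>s\<in>SS k. monm x s k * monm y s k)"
proof -
  have "(x \<bullet> y) ^ k = (\<Prod>m<k. \<Sum>i\<in>UNIV. x$i * y$i)"
    by (simp add: inner_vec_def)
  also have "\<dots> = (\<Sum>s\<in>SS k. \<Prod>m<k. x $ s m * y $ s m)"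
    unfolding SS_def by (rule prod_sum_PiE) auto
  also have "\<dots> = (\<Sum>s\<in>SS k. monm x s k * monm y s k)"
    by (simp add: monm_def prod.distrib)
  finally show ?thesis .
qed

lemma gauss_split: "gaussK \<sigma> x y = ee \<sigma> x * ee \<sigma> y * exp (2*\<sigma>\<^sup>2 * (x \<bullet> y))"
proof -
  have h: "(norm (x - y))\<^sup>2 = (norm x)\<^sup>2 + (norm y)\<^sup>2 - 2 * (x \<bullet> y)"
    by (simp add: power2_norm_eq_inner inner_diff inner_commute)
  have "- (\<sigma>\<^sup>2) * (norm (x - y))\<^sup>2 = - (\<sigma>\<^sup>2) * (norm x)\<^sup>2 + - (\<sigma>\<^sup>2) * (norm y)\<^sup>2 + 2*\<sigma>\<^sup>2 * (x \<bullet> y)"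
    unfolding h by (simp add: algebra_simps)
  then show ?thesis unfolding gaussK_def ee_def
    by (simp add: exp_add[symmetric])
qed

lemma exp_ak_sums: "(\<lambda>k. ak \<sigma> k * t ^ k) sums exp (2*\<sigma>\<^sup>2 * t)"
proof -
  have "(\<lambda>k. (2*\<sigma>\<^sup>2 * t)^k /\<^sub>R fact k) sums exp (2*\<sigma>\<^sup>2 * t)" by (rule exp_converges)
  moreover have "(\<lambda>k. (2*\<sigma>\<^sup>2 * t)^k /\<^sub>R fact k) = (\<lambda>k. ak \<sigma> k * t ^ k)"
    by (auto simp: ak_def power_mult_distrib divide_simps)
  ultimately show ?thesis by simp
qed

lemma gauss_sums: "(\<lambda>k. ee \<sigma> x * ee \<sigma> y * (ak \<sigma> k * (\<Sum>s\<in>SS k. monm x s k * monm y s k))) sums gaussK \<sigma> x y"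
  unfolding gauss_split inner_pow[symmetric]
  by (intro sums_mult exp_ak_sums)

lemma abs_mono_le1: "x \<in> cube \<Longrightarrow> \<bar>monm x s k\<bar> \<le> 1"
  unfolding monm_def cube_def abs_prod
  by (rule prod_le_1) (auto simp: abs_le_iff)

lemma ee_pos: "ee \<sigma> x > 0" unfolding ee_def by simp
lemma ee_le1: "ee \<sigma> x \<le> 1" unfolding ee_def by simp

lemma cont_ee: "continuous_on UNIV (ee \<sigma>)" unfolding ee_def by (intro continuous_intros)
lemma cont_mono: "continuous_on UNIV (\<lambda>x. monm x s k)" unfolding monm_def by (intro continuous_intros)

definition bt :: "real \<Rightarrow> nat \<Rightarrow> real" where "bt c k = sqrt (c^k / fact k)"

lemma fact_bound: "real k ^ k \<le> exp (real k) * fact k"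
proof -
  have s: "(\<lambda>j. real k ^ j / fact j) sums exp (real k)"
    using exp_converges[of "real k"] by (simp add: divide_simps)
  have "real k ^ k / fact k = (\<Sum>j\<in>{k}. real k ^ j / fact j)" by simp
  also have "\<dots> \<le> exp (real k)"
    using sum_le_suminf[of "\<lambda>j. real k ^ j / fact j" "{k}"] s by (auto simp: sums_iff)
  finally show ?thesis by (simp add: divide_simps)
qed

lemma bt_nonneg: "c \<ge> 0 \<Longrightarrow> bt c k \<ge> 0" unfolding bt_def by simp

lemma bt_le:
  assumes c: "c > 0" and d: "d > 0" and k: "k \<ge> d"
  shows "bt c k \<le> sqrt (exp 1 * c / real d) ^ k"
proof -
  have kp: "real k > 0" using d k by simp
  have "c^k / fact k \<le> c^k * exp (real k) / real k ^ k"
    using fact_bound[of k] c kp by (simp add: divide_simps mult.commute)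
  also have "\<dots> = (exp 1 * c / real k) ^ k"
    by (simp add: power_divide power_mult_distrib exp_of_nat_mult[symmetric] mult.commute)
  also have "\<dots> \<le> (exp 1 * c / real d) ^ k"
    using c d k kp by (intro power_mono divide_left_mono) auto
  finally have "c^k / fact k \<le> (exp 1 * c / real d) ^ k" .
  then show ?thesis unfolding bt_def real_sqrt_power[symmetric] by (rule real_sqrt_le_mono)
qed

lemma bt_tail:
  assumes c: "c > 0" and d: "d > 0" and dc: "real d \<ge> 4 * exp 1 * c"
  shows "summable (bt c)" and "(\<Sum>k. bt c (k + d)) \<le> 2 * sqrt (exp 1 * c / real d) ^ d"
    and "sqrt (exp 1 * c / real d) \<le> 1/2"
proof -
  define r where "r = sqrt (exp 1 * c / real d)"
  have r0: "r \<ge> 0" unfolding r_def using c by simp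
  have "exp 1 * c / real d \<le> 1/4" using dc d by (simp add: divide_simps)
  then have "r \<le> sqrt (1/4)" unfolding r_def by (rule real_sqrt_le_mono)
  also have "sqrt (1/4::real) = 1/2" by (simp add: real_sqrt_divide)
  finally have r2: "r \<le> 1/2" .
  then show "sqrt (exp 1 * c / real d) \<le> 1/2" unfolding r_def .
  have geo: "summable (\<lambda>k. r ^ k)" using r0 r2 by (intro summable_geometric) simp
  have le: "\<And>k. bt c (k + d) \<le> r ^ (k + d)"
    unfolding r_def using c d by (intro bt_le) auto
  have geo2: "summable (\<lambda>k. r ^ (k + d))" using geo by (simp add: summable_iff_shift)
  have sd: "summable (\<lambda>k. bt c (k + d))"
    by (rule summable_comparison_test'[OF geo2, of 0]) (use c in \<open>simp add: bt_nonneg le\<close>)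
  then show "summable (bt c)" by (simp add: summable_iff_shift)
  have "(\<Sum>k. bt c (k + d)) \<le> (\<Sum>k. r ^ (k + d))"
    by (intro suminf_le le sd geo2)
  also have "(\<Sum>k. r ^ (k + d)) = r^d * (\<Sum>k. r ^ k)"
    by (subst suminf_mult[OF geo, symmetric]) (simp add: power_add mult.commute)
  also have "\<dots> = r^d / (1 - r)" using r0 r2 by (subst suminf_geometric) auto
  also have "\<dots> \<le> 2 * r^d"
  proof -
    have "r^d*1 \<le> r^d*(2*(1-r))" using r0 r2 by (intro mult_left_mono) auto
    then show ?thesis using r0 r2 by (simp add: divide_simps algebra_simps)
  qed
  finally show "(\<Sum>k. bt c (k + d)) \<le> 2 * sqrt (exp 1 * c / real d) ^ d" unfolding r_def .
qed

definition pat :: "(nat \<Rightarrow> 'n) \<Rightarrow> nat \<Rightarrow> ('n \<Rightarrow> nat)" where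
  "pat s k = (\<lambda>i. card {m\<in>{..<k}. s m = i})"
definition zpow :: "real^'n \<Rightarrow> ('n \<Rightarrow> nat) \<Rightarrow> real" where
  "zpow x \<alpha> = (\<Prod>i\<in>UNIV. x$i ^ \<alpha> i)"
definition AA :: "nat \<Rightarrow> ('n \<Rightarrow> nat) set" where "AA d = {\<alpha>. \<forall>i. \<alpha> i < d}"

lemma mono_pat: "monm x s k = zpow x (pat s k)"
proof -
  have "monm x s k = (\<Prod>i\<in>UNIV. \<Prod>m\<in>{m\<in>{..<k}. s m = i}. x $ s m)"
    unfolding monm_def by (rule prod.group[symmetric]) auto
  also have "\<dots> = (\<Prod>i\<in>UNIV. \<Prod>m\<in>{m\<in>{..<k}. s m = i}. x $ i)"
    by (intro prod.cong) auto
  also have "\<dots> = zpow x (pat s k)" by (simp add: zpow_def pat_def)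
  finally show ?thesis .
qed

lemma pat_AA: "k < d \<Longrightarrow> pat s k \<in> AA d"
proof -
  assume "k < d"
  have "card {m\<in>{..<k}. s m = i} \<le> card {..<k}" for i by (intro card_mono) auto
  then show ?thesis using \<open>k < d\<close> unfolding AA_def pat_def by (auto intro: le_less_trans)
qed

lemma AA_PiE: "AA d = PiE (UNIV :: 'n::finite set) (\<lambda>_. {..<d})"
  unfolding AA_def PiE_def extensional_def by auto

lemma finite_AA[simp]: "finite (AA d :: ('n::finite \<Rightarrow> nat) set)"
  unfolding AA_PiE by (simp add: finite_PiE)

lemma card_AA: "card (AA d :: ('n::finite \<Rightarrow> nat) set) = d ^ CARD('n)"
  unfolding AA_PiE by (simp add: card_PiE)

lemma abs_zpow_le1: "x \<in> cube \<Longrightarrow> \<bar>zpow x \<alpha>\<bar> \<le> 1"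
proof -
  assume "x \<in> cube"
  then have h: "\<bar>x$i\<bar> \<le> 1" for i unfolding cube_def by (auto simp: abs_le_iff)
  show ?thesis unfolding zpow_def abs_prod power_abs
    by (rule prod_le_1) (auto intro: power_le_one h)
qed

lemma cont_zpow: "continuous_on UNIV (\<lambda>x. zpow x \<alpha>)" unfolding zpow_def by (intro continuous_intros)

lemma lin_dep:
  fixes v :: "'p \<Rightarrow> 'a \<Rightarrow> real"
  assumes "finite A" "finite J" "card J > card A"
  shows "\<exists>t. (\<exists>p\<in>J. t p \<noteq> 0) \<and> (\<forall>\<alpha>\<in>A. (\<Sum>p\<in>J. t p * v p \<alpha>) = 0)"
  using assms
proof (induction A arbitrary: J v rule: finite_induct)
  case empty
  then obtain p where "p \<in> J" by fastforce
  then show ?case by (intro exI[of _ "\<lambda>_. 1"]) auto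
next
  case (insert \<beta> A)
  show ?case
  proof (cases "\<forall>p\<in>J. v p \<beta> = 0")
    case True
    have "card J > card A" using insert by simp
    with insert.IH[of J v] insert.prems obtain t where
      t: "\<exists>p\<in>J. t p \<noteq> 0" "\<forall>\<alpha>\<in>A. (\<Sum>p\<in>J. t p * v p \<alpha>) = 0" by auto
    show ?thesis using t True by (intro exI[of _ t]) auto
  next
    case False
    then obtain p0 where p0: "p0 \<in> J" "v p0 \<beta> \<noteq> 0" by auto
    define J' where "J' = J - {p0}"
    define w where "w p \<alpha> = v p \<alpha> - (v p \<beta> / v p0 \<beta>) * v p0 \<alpha>" for p \<alpha>
    have cJ: "card J' > card A" using insert p0 unfolding J'_def by simp
    from insert.IH[of J' w] cJ insert.prems obtain t where
      t: "\<exists>p\<in>J'. t p \<noteq> 0" "\<forall>\<alpha>\<in>A. (\<Sum>p\<in>J'. t p * w p \<alpha>) = 0" unfolding J'_def by auto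
    define t' where "t' p = (if p = p0 then - (\<Sum>q\<in>J'. t q * v q \<beta>) / v p0 \<beta> else t p)" for p
    have fJ: "finite J'" using insert unfolding J'_def by simp
    have key: "(\<Sum>p\<in>J. t' p * v p \<alpha>) = (\<Sum>p\<in>J'. t p * w p \<alpha>)" for \<alpha>
    proof -
      have "(\<Sum>p\<in>J. t' p * v p \<alpha>) = t' p0 * v p0 \<alpha> + (\<Sum>p\<in>J'. t' p * v p \<alpha>)"
        using p0 insert.prems unfolding J'_def by (simp add: sum.remove)
      also have "(\<Sum>p\<in>J'. t' p * v p \<alpha>) = (\<Sum>p\<in>J'. t p * v p \<alpha>)"
        unfolding t'_def J'_def by (intro sum.cong) auto
      also have "(\<Sum>p\<in>J'. t p * w p \<alpha>) = (\<Sum>p\<in>J'. t p * v p \<alpha>) - (\<Sum>q\<in>J'. t q * v q \<beta>) / v p0 \<beta> * v p0 \<alpha>"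
        unfolding w_def by (simp add: algebra_simps sum_subtractf sum_distrib_left sum_divide_distrib)
      ultimately show ?thesis unfolding t'_def by simp
    qed
    have "\<forall>\<alpha>\<in>insert \<beta> A. (\<Sum>p\<in>J. t' p * v p \<alpha>) = 0"
    proof
      fix \<alpha> assume "\<alpha> \<in> insert \<beta> A"
      then show "(\<Sum>p\<in>J. t' p * v p \<alpha>) = 0"
      proof
        assume "\<alpha> = \<beta>"
        then show ?thesis unfolding key w_def using p0 by simp
      next
        assume "\<alpha> \<in> A" then show ?thesis unfolding key using t by simp
      qed
    qed
    moreover have "\<exists>p\<in>J. t' p \<noteq> 0" using t unfolding t'_def J'_def by auto
    ultimately show ?thesis by blast
  qed
qed

lemma sum_list_map_nth: "sum_list (map f xs) = (\<Sum>j<length xs. f (xs!j))"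
  by (simp add: sum_list_sum_nth atLeast0LessThan)

definition Bc :: "real \<Rightarrow> (real \<times> (real^'n)) list \<Rightarrow> (nat \<Rightarrow> 'n) \<Rightarrow> nat \<Rightarrow> real" where
  "Bc \<sigma> ps s k = (\<Sum>j<length ps. fst (ps!j) * ee \<sigma> (snd (ps!j)) * monm (snd (ps!j)) s k)"

definition Qv :: "real \<Rightarrow> (real \<times> (real^'n)) list \<Rightarrow> real" where
  "Qv \<sigma> ps = sum_list (map (\<lambda>(c, x). sum_list (map (\<lambda>(d, y). c * d * gaussK \<sigma> x y) ps)) ps)"

lemma swap3: "(\<Sum>i\<in>A. \<Sum>j\<in>B. \<Sum>s\<in>C. f i j s) = (\<Sum>s\<in>C. \<Sum>i\<in>A. \<Sum>j\<in>B. f i j s)"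
proof -
  have "(\<Sum>i\<in>A. \<Sum>j\<in>B. \<Sum>s\<in>C. f i j s) = (\<Sum>i\<in>A. \<Sum>s\<in>C. \<Sum>j\<in>B. f i j s)"
    by (intro sum.cong refl sum.swap)
  also have "\<dots> = (\<Sum>s\<in>C. \<Sum>i\<in>A. \<Sum>j\<in>B. f i j s)" by (rule sum.swap)
  finally show ?thesis .
qed

lemma kev_eq: "kev K ps z = (\<Sum>j<length ps. fst (ps!j) * K (snd (ps!j)) z)"
  unfolding kev_def sum_list_map_nth by (simp add: case_prod_beta)

lemma Qv_eq: "Qv \<sigma> ps = (\<Sum>i<length ps. \<Sum>j<length ps. fst (ps!i) * fst (ps!j) * gaussK \<sigma> (snd (ps!i)) (snd (ps!j)))"
  unfolding Qv_def sum_list_map_nth by (simp add: case_prod_beta)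

lemma knorm_Qv: "knorm (gaussK \<sigma>) ps = sqrt (Qv \<sigma> ps)"
  unfolding knorm_def Qv_def ..

lemma kev_sums:
  "(\<lambda>k. ee \<sigma> z * (ak \<sigma> k * (\<Sum>s\<in>SS k. monm z s k * Bc \<sigma> ps s k))) sums kev (gaussK \<sigma>) ps z"
proof -
  have "(\<lambda>k. \<Sum>j<length ps. fst (ps!j) * (ee \<sigma> (snd (ps!j)) * ee \<sigma> z *
        (ak \<sigma> k * (\<Sum>s\<in>SS k. monm (snd (ps!j)) s k * monm z s k))))
     sums (\<Sum>j<length ps. fst (ps!j) * gaussK \<sigma> (snd (ps!j)) z)"
    by (intro sums_sum sums_mult gauss_sums)
  moreover have "(\<lambda>k. \<Sum>j<length ps. fst (ps!j) * (ee \<sigma> (snd (ps!j)) * ee \<sigma> z *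
        (ak \<sigma> k * (\<Sum>s\<in>SS k. monm (snd (ps!j)) s k * monm z s k)))) =
     (\<lambda>k. ee \<sigma> z * (ak \<sigma> k * (\<Sum>s\<in>SS k. monm z s k * Bc \<sigma> ps s k)))"
    unfolding Bc_def
    by (auto simp: sum_distrib_left sum_distrib_right algebra_simps intro!: ext sum.swap[THEN trans] sum.cong)
  ultimately show ?thesis unfolding kev_eq by simp
qed

lemma Qv_sums: "(\<lambda>k. ak \<sigma> k * (\<Sum>s\<in>SS k. (Bc \<sigma> ps s k)\<^sup>2)) sums Qv \<sigma> ps"
proof -
  have "(\<lambda>k. \<Sum>i<length ps. \<Sum>j<length ps. fst (ps!i) * fst (ps!j) * (ee \<sigma> (snd (ps!i)) * ee \<sigma> (snd (ps!j)) *
        (ak \<sigma> k * (\<Sum>s\<in>SS k. monm (snd (ps!i)) s k * monm (snd (ps!j)) s k))))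
     sums Qv \<sigma> ps"
    unfolding Qv_eq by (intro sums_sum sums_mult gauss_sums)
  moreover have "(\<lambda>k. \<Sum>i<length ps. \<Sum>j<length ps. fst (ps!i) * fst (ps!j) * (ee \<sigma> (snd (ps!i)) * ee \<sigma> (snd (ps!j)) *
        (ak \<sigma> k * (\<Sum>s\<in>SS k. monm (snd (ps!i)) s k * monm (snd (ps!j)) s k)))) =
      (\<lambda>k. ak \<sigma> k * (\<Sum>s\<in>SS k. (Bc \<sigma> ps s k)\<^sup>2))"
  proof
    fix k
    show "(\<Sum>i<length ps. \<Sum>j<length ps. fst (ps!i) * fst (ps!j) * (ee \<sigma> (snd (ps!i)) * ee \<sigma> (snd (ps!j)) *
        (ak \<sigma> k * (\<Sum>s\<in>SS k. monm (snd (ps!i)) s k * monm (snd (ps!j)) s k)))) =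
      ak \<sigma> k * (\<Sum>s\<in>SS k. (Bc \<sigma> ps s k)\<^sup>2)"
    proof -
      have "ak \<sigma> k * (\<Sum>s\<in>SS k. (Bc \<sigma> ps s k)\<^sup>2) = (\<Sum>s\<in>SS k. \<Sum>i<length ps. \<Sum>j<length ps.
         ak \<sigma> k * ((fst (ps!j) * ee \<sigma> (snd (ps!j)) * monm (snd (ps!j)) s k) * (fst (ps!i) * ee \<sigma> (snd (ps!i)) * monm (snd (ps!i)) s k)))"
        unfolding Bc_def power2_eq_square sum_distrib_right sum_distrib_left ..
      also have "\<dots> = (\<Sum>i<length ps. \<Sum>j<length ps. \<Sum>s\<in>SS k.
         ak \<sigma> k * ((fst (ps!j) * ee \<sigma> (snd (ps!j)) * monm (snd (ps!j)) s k) * (fst (ps!i) * ee \<sigma> (snd (ps!i)) * monm (snd (ps!i)) s k)))"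
        by (rule swap3[symmetric])
      also have "\<dots> = (\<Sum>i<length ps. \<Sum>j<length ps. fst (ps!i) * fst (ps!j) * (ee \<sigma> (snd (ps!i)) * ee \<sigma> (snd (ps!j)) *
        (ak \<sigma> k * (\<Sum>s\<in>SS k. monm (snd (ps!i)) s k * monm (snd (ps!j)) s k))))"
        by (intro sum.cong refl) (simp add: sum_distrib_left algebra_simps)
      finally show ?thesis by simp
    qed
  qed
  ultimately show ?thesis by simp
qed

lemma Qv_nonneg: "Qv \<sigma> ps \<ge> 0"
  by (rule sums_le[OF _ sums_zero Qv_sums]) (intro mult_nonneg_nonneg ak_pos sum_nonneg; simp)

lemma Qv_term_le: "ak \<sigma> k * (\<Sum>s\<in>SS k. (Bc \<sigma> ps s k)\<^sup>2) \<le> Qv \<sigma> ps"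
proof -
  have "(\<Sum>j\<in>{k}. ak \<sigma> j * (\<Sum>s\<in>SS j. (Bc \<sigma> ps s j)\<^sup>2)) \<le> Qv \<sigma> ps"
    using Qv_sums[of \<sigma> ps]
    by (intro sum_le_suminf[where f="\<lambda>j. ak \<sigma> j * (\<Sum>s\<in>SS j. (Bc \<sigma> ps s j)\<^sup>2)", THEN order_trans])
       (auto simp: sums_iff intro!: mult_nonneg_nonneg ak_pos sum_nonneg)
  then show ?thesis by simp
qed

definition cb :: "real \<Rightarrow> 'n itself \<Rightarrow> real" where "cb \<sigma> _ = 2 * \<sigma>\<^sup>2 * real CARD('n) ^ 2"

lemma cb_pos: "\<sigma> > 0 \<Longrightarrow> cb \<sigma> TYPE('n::finite) > 0"
  unfolding cb_def by simp

lemma abs_le_sqrt_sum: "finite S \<Longrightarrow> s \<in> S \<Longrightarrow> \<bar>f s\<bar> \<le> sqrt (\<Sum>t\<in>S. (f t)\<^sup>2)"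
  by (metis member_le_sum real_sqrt_abs real_sqrt_le_mono zero_le_power2)

lemma Bc_abs_sum:
  fixes ps :: "(real \<times> (real^'n::finite)) list"
  shows "ak \<sigma> k * (\<Sum>s\<in>SS k. \<bar>Bc \<sigma> ps s k\<bar>) \<le> bt (cb \<sigma> TYPE('n::finite)) k * sqrt (Qv \<sigma> ps)"
proof -
  define X where "X = (\<Sum>s\<in>(SS k :: (nat \<Rightarrow> 'n) set). (Bc \<sigma> ps s k)\<^sup>2)"
  have X0: "X \<ge> 0" unfolding X_def by (simp add: sum_nonneg)
  have "(\<Sum>s\<in>(SS k :: (nat \<Rightarrow> 'n) set). \<bar>Bc \<sigma> ps s k\<bar>) \<le> (\<Sum>s\<in>(SS k :: (nat \<Rightarrow> 'n) set). sqrt X)"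
    unfolding X_def by (intro sum_mono abs_le_sqrt_sum) auto
  also have "\<dots> = real CARD('n) ^ k * sqrt X" by (simp add: card_SS)
  finally have 1: "(\<Sum>s\<in>(SS k :: (nat \<Rightarrow> 'n) set). \<bar>Bc \<sigma> ps s k\<bar>) \<le> real CARD('n) ^ k * sqrt X" .
  have "ak \<sigma> k * (\<Sum>s\<in>SS k. \<bar>Bc \<sigma> ps s k\<bar>) \<le> ak \<sigma> k * (real CARD('n) ^ k * sqrt X)"
    by (intro mult_left_mono 1 ak_pos)
  also have "\<dots> = real CARD('n) ^ k * sqrt (ak \<sigma> k) * sqrt (ak \<sigma> k * X)"
    using ak_pos[of \<sigma> k] X0 by (simp add: real_sqrt_mult)
  also have "\<dots> \<le> real CARD('n) ^ k * sqrt (ak \<sigma> k) * sqrt (Qv \<sigma> ps)"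
    unfolding X_def using Qv_term_le[of \<sigma> k ps] ak_pos[of \<sigma> k]
    by (intro mult_left_mono real_sqrt_le_mono) auto
  also have "real CARD('n) ^ k * sqrt (ak \<sigma> k) = bt (cb \<sigma> TYPE('n)) k"
  proof -
    have "bt (cb \<sigma> TYPE('n)) k = sqrt ((real CARD('n) ^ k)\<^sup>2 * ak \<sigma> k)"
      unfolding bt_def cb_def ak_def by (simp add: power_mult_distrib power_even_eq power_mult[symmetric] mult.commute)
    then show ?thesis by (simp add: real_sqrt_mult)
  qed
  finally show ?thesis .
qed

lemma term_bound:
  fixes ps :: "(real \<times> (real^'n::finite)) list"
  assumes "z \<in> cube"
  shows "\<bar>ee \<sigma> z * (ak \<sigma> k * (\<Sum>s\<in>SS k. monm z s k * Bc \<sigma> ps s k))\<bar> \<le> bt (cb \<sigma> TYPE('n::finite)) k * sqrt (Qv \<sigma> ps)"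
proof -
  have "\<bar>ee \<sigma> z * (ak \<sigma> k * (\<Sum>s\<in>SS k. monm z s k * Bc \<sigma> ps s k))\<bar> \<le> ak \<sigma> k * (\<Sum>s\<in>SS k. \<bar>monm z s k * Bc \<sigma> ps s k\<bar>)"
  proof -
    have "\<bar>ee \<sigma> z * (ak \<sigma> k * (\<Sum>s\<in>SS k. monm z s k * Bc \<sigma> ps s k))\<bar> =
       ee \<sigma> z * (ak \<sigma> k * \<bar>\<Sum>s\<in>SS k. monm z s k * Bc \<sigma> ps s k\<bar>)"
      using ee_pos[of \<sigma> z] ak_pos[of \<sigma> k] by (simp add: abs_mult)
    also have "\<dots> \<le> 1 * (ak \<sigma> k * \<bar>\<Sum>s\<in>SS k. monm z s k * Bc \<sigma> ps s k\<bar>)"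
      using ee_le1[of \<sigma> z] ak_pos[of \<sigma> k] by (intro mult_right_mono) auto
    also have "\<dots> \<le> ak \<sigma> k * (\<Sum>s\<in>SS k. \<bar>monm z s k * Bc \<sigma> ps s k\<bar>)"
      using ak_pos[of \<sigma> k] by (simp add: mult_left_mono sum_abs)
    finally show ?thesis .
  qed
  also have "\<dots> \<le> ak \<sigma> k * (\<Sum>s\<in>SS k. \<bar>Bc \<sigma> ps s k\<bar>)"
    using abs_mono_le1[OF assms] by (intro mult_left_mono sum_mono ak_pos) (auto simp: abs_mult intro: mult_left_le_one_le)
  also have "\<dots> \<le> bt (cb \<sigma> TYPE('n)) k * sqrt (Qv \<sigma> ps)" by (rule Bc_abs_sum)
  finally show ?thesis .
qed

lemma sums_abs_le:
  fixes f g :: "nat \<Rightarrow> real"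
  assumes "f sums S" "summable g" "\<And>k. \<bar>f k\<bar> \<le> g k"
  shows "\<bar>S\<bar> \<le> suminf g"
proof -
  have sa: "summable (\<lambda>k. \<bar>f k\<bar>)" by (rule summable_comparison_test[OF _ assms(2)]) (use assms(3) in auto)
  have "\<bar>S\<bar> = \<bar>suminf f\<bar>" using assms(1) by (simp add: sums_iff)
  also have "\<dots> \<le> (\<Sum>k. \<bar>f k\<bar>)" using summable_norm[of f] sa by simp
  also have "\<dots> \<le> suminf g" by (intro suminf_le sa assms)
  finally show ?thesis .
qed

lemma kev_abs_bound:
  assumes "z \<in> cube" "summable (bt (cb \<sigma> TYPE('n::finite)))"
  shows "\<bar>kev (gaussK \<sigma>) (ps :: (real \<times> (real^'n)) list) z\<bar> \<le> (\<Sum>k. bt (cb \<sigma> TYPE('n)) k) * sqrt (Qv \<sigma> ps)"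
proof -
  have "\<bar>kev (gaussK \<sigma>) ps z\<bar> \<le> (\<Sum>k. bt (cb \<sigma> TYPE('n)) k * sqrt (Qv \<sigma> ps))"
    by (rule sums_abs_le[OF kev_sums summable_mult2[OF assms(2)] term_bound[OF assms(1)]])
  also have "\<dots> = (\<Sum>k. bt (cb \<sigma> TYPE('n)) k) * sqrt (Qv \<sigma> ps)"
    using assms(2) by (rule suminf_mult2[symmetric])
  finally show ?thesis .
qed

definition Dc :: "real \<Rightarrow> (real \<times> (real^'n)) list \<Rightarrow> nat \<Rightarrow> ('n \<Rightarrow> nat) \<Rightarrow> real" where
  "Dc \<sigma> ps d \<alpha> = (\<Sum>k<d. ak \<sigma> k * (\<Sum>s\<in>{s\<in>SS k. pat s k = \<alpha>}. Bc \<sigma> ps s k))"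

definition Tm :: "real \<Rightarrow> (real \<times> (real^'n)) list \<Rightarrow> real^'n \<Rightarrow> nat \<Rightarrow> real" where
  "Tm \<sigma> ps z k = ee \<sigma> z * (ak \<sigma> k * (\<Sum>s\<in>SS k. monm z s k * Bc \<sigma> ps s k))"

lemma head_eq:
  fixes ps :: "(real \<times> (real^'n::finite)) list"
  shows "(\<Sum>k<d. Tm \<sigma> ps z k) = ee \<sigma> z * (\<Sum>\<alpha>\<in>AA d. Dc \<sigma> ps d \<alpha> * zpow z \<alpha>)"
proof -
  have "(\<Sum>k<d. Tm \<sigma> ps z k) = ee \<sigma> z * (\<Sum>k<d. ak \<sigma> k * (\<Sum>s\<in>SS k. zpow z (pat s k) * Bc \<sigma> ps s k))"
    unfolding Tm_def mono_pat by (simp add: sum_distrib_left)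
  also have "(\<Sum>k<d. ak \<sigma> k * (\<Sum>s\<in>SS k. zpow z (pat s k) * Bc \<sigma> ps s k)) =
      (\<Sum>k<d. ak \<sigma> k * (\<Sum>\<alpha>\<in>AA d. \<Sum>s\<in>{s\<in>SS k. pat s k = \<alpha>}. zpow z (pat s k) * Bc \<sigma> ps s k))"
    by (intro sum.cong refl arg_cong2[where f="(*)"] sum.group[symmetric]) (auto intro: pat_AA)
  also have "\<dots> = (\<Sum>k<d. \<Sum>\<alpha>\<in>AA d. zpow z \<alpha> * (ak \<sigma> k * (\<Sum>s\<in>{s\<in>SS k. pat s k = \<alpha>}. Bc \<sigma> ps s k)))"
    by (intro sum.cong refl) (auto simp: sum_distrib_left algebra_simps)
  also have "\<dots> = (\<Sum>\<alpha>\<in>AA d. Dc \<sigma> ps d \<alpha> * zpow z \<alpha>)"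
    unfolding Dc_def by (subst sum.swap) (simp add: sum_distrib_left sum_distrib_right mult.commute)
  finally show ?thesis .
qed

lemma kev_split:
  fixes ps :: "(real \<times> (real^'n::finite)) list"
  shows "kev (gaussK \<sigma>) ps z = ee \<sigma> z * (\<Sum>\<alpha>\<in>AA d. Dc \<sigma> ps d \<alpha> * zpow z \<alpha>) + (\<Sum>k. Tm \<sigma> ps z (k + d))"
proof -
  have s: "Tm \<sigma> ps z sums kev (gaussK \<sigma>) ps z" using kev_sums unfolding Tm_def[abs_def] .
  then have "kev (gaussK \<sigma>) ps z = suminf (Tm \<sigma> ps z)" by (simp add: sums_iff)
  also have "\<dots> = (\<Sum>k. Tm \<sigma> ps z (k + d)) + (\<Sum>k<d. Tm \<sigma> ps z k)"
    using s by (intro suminf_split_initial_segment) (simp add: sums_iff)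
  finally show ?thesis unfolding head_eq by simp
qed

lemma tail_bound:
  fixes ps :: "(real \<times> (real^'n::finite)) list"
  assumes "z \<in> cube" "summable (bt (cb \<sigma> TYPE('n)))"
  shows "\<bar>\<Sum>k. Tm \<sigma> ps z (k + d)\<bar> \<le> (\<Sum>k. bt (cb \<sigma> TYPE('n)) (k + d)) * sqrt (Qv \<sigma> ps)"
proof -
  have s: "Tm \<sigma> ps z sums kev (gaussK \<sigma>) ps z" using kev_sums unfolding Tm_def[abs_def] .
  have sd: "summable (\<lambda>k. Tm \<sigma> ps z (k + d))" using s by (simp add: sums_iff summable_iff_shift)
  have bd: "summable (\<lambda>k. bt (cb \<sigma> TYPE('n)) (k + d))" using assms(2) by (simp add: summable_iff_shift)
  have "\<bar>\<Sum>k. Tm \<sigma> ps z (k + d)\<bar> \<le> (\<Sum>k. bt (cb \<sigma> TYPE('n)) (k + d) * sqrt (Qv \<sigma> ps))"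
    by (rule sums_abs_le[OF summable_sums[OF sd] summable_mult2[OF bd]])
       (unfold Tm_def, rule term_bound[OF assms(1)])
  also have "\<dots> = (\<Sum>k. bt (cb \<sigma> TYPE('n)) (k + d)) * sqrt (Qv \<sigma> ps)"
    using bd by (rule suminf_mult2[symmetric])
  finally show ?thesis .
qed

lemma Dc_bound:
  fixes ps :: "(real \<times> (real^'n::finite)) list"
  assumes "\<sigma> > 0" "summable (bt (cb \<sigma> TYPE('n)))"
  shows "\<bar>Dc \<sigma> ps d \<alpha>\<bar> \<le> (\<Sum>k. bt (cb \<sigma> TYPE('n)) k) * sqrt (Qv \<sigma> ps)"
proof -
  have "\<bar>Dc \<sigma> ps d \<alpha>\<bar> \<le> (\<Sum>k<d. ak \<sigma> k * (\<Sum>s\<in>SS k. \<bar>Bc \<sigma> ps s k\<bar>))"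
    unfolding Dc_def
  proof (rule order_trans[OF sum_abs], intro sum_mono)
    fix k
    have "\<bar>ak \<sigma> k * (\<Sum>s\<in>{s\<in>SS k. pat s k = \<alpha>}. Bc \<sigma> ps s k)\<bar> = ak \<sigma> k * \<bar>\<Sum>s\<in>{s\<in>SS k. pat s k = \<alpha>}. Bc \<sigma> ps s k\<bar>"
      using ak_pos[of \<sigma> k] by (simp add: abs_mult)
    also have "\<dots> \<le> ak \<sigma> k * (\<Sum>s\<in>SS k. \<bar>Bc \<sigma> ps s k\<bar>)"
      using ak_pos[of \<sigma> k] by (intro mult_left_mono order_trans[OF sum_abs] sum_mono2) auto
    finally show "\<bar>ak \<sigma> k * (\<Sum>s\<in>{s\<in>SS k. pat s k = \<alpha>}. Bc \<sigma> ps s k)\<bar> \<le> ak \<sigma> k * (\<Sum>s\<in>SS k. \<bar>Bc \<sigma> ps s k\<bar>)" .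
  qed
  also have "\<dots> \<le> (\<Sum>k<d. bt (cb \<sigma> TYPE('n)) k * sqrt (Qv \<sigma> ps))"
    by (intro sum_mono Bc_abs_sum)
  also have "\<dots> = (\<Sum>k<d. bt (cb \<sigma> TYPE('n)) k) * sqrt (Qv \<sigma> ps)" by (simp add: sum_distrib_right)
  also have "\<dots> \<le> (\<Sum>k. bt (cb \<sigma> TYPE('n)) k) * sqrt (Qv \<sigma> ps)"
    using assms cb_pos[OF assms(1)] Qv_nonneg
    by (intro mult_right_mono sum_le_suminf) (auto intro: bt_nonneg less_imp_le)
  finally show ?thesis .
qed

lemma kev_kdiff: "kev K (kdiff ps qs) z = kev K ps z - kev K qs z"
  unfolding kev_def kdiff_def
  by (simp add: sum_list_map_nth nth_append case_prod_beta sum_negf)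

lemma approx_ball:
  fixes f :: "real^'n \<Rightarrow> real"
  assumes sig: "\<sigma> > 0" and sb: "summable (bt (cb \<sigma> TYPE('n)))"
    and f: "f \<in> rkhs_ball (gaussK \<sigma> :: real^'n \<Rightarrow> real^'n \<Rightarrow> real) cube" and e: "e > 0"
  shows "\<exists>ps :: (real \<times> (real^'n)) list. Qv \<sigma> ps \<le> 1 \<and>
           (\<forall>z\<in>cube. \<bar>f z - kev (gaussK \<sigma>) ps z\<bar> \<le> (\<Sum>k. bt (cb \<sigma> TYPE('n)) k) * e)"
proof -
  define Cs where "Cs = (\<Sum>k. bt (cb \<sigma> TYPE('n)) k)"
  from f obtain ps :: "nat \<Rightarrow> (real \<times> (real^'n)) list" and r where
    cau: "\<forall>e>0. \<exists>N. \<forall>k\<ge>N. \<forall>l\<ge>N. knorm (gaussK \<sigma>) (kdiff (ps k) (ps l)) < e"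
    and lim: "\<forall>z\<in>cube. (\<lambda>k. kev (gaussK \<sigma>) (ps k) z) \<longlonglongrightarrow> f z"
    and nl: "(\<lambda>k. knorm (gaussK \<sigma>) (ps k)) \<longlonglongrightarrow> r" and r1: "r < 1"
    unfolding rkhs_ball_def by blast
  from cau e obtain N where N: "\<forall>k\<ge>N. \<forall>l\<ge>N. knorm (gaussK \<sigma>) (kdiff (ps k) (ps l)) < e" by blast
  from order_tendstoD(2)[OF nl r1] obtain N2 where N2: "\<forall>k\<ge>N2. knorm (gaussK \<sigma>) (ps k) < 1"
    unfolding eventually_sequentially by blast
  define k where "k = max N N2"
  have "sqrt (Qv \<sigma> (ps k)) < 1" using N2 unfolding k_def knorm_Qv by simp
  then have Q1: "Qv \<sigma> (ps k) \<le> 1" by simp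
  have Cs0: "Cs \<ge> 0" unfolding Cs_def using sb cb_pos[OF sig] by (intro suminf_nonneg) (auto intro: bt_nonneg less_imp_le)
  have "\<bar>f z - kev (gaussK \<sigma>) (ps k) z\<bar> \<le> Cs * e" if z: "z \<in> cube" for z
  proof -
    have "(\<lambda>l. \<bar>kev (gaussK \<sigma>) (ps l) z - kev (gaussK \<sigma>) (ps k) z\<bar>) \<longlonglongrightarrow> \<bar>f z - kev (gaussK \<sigma>) (ps k) z\<bar>"
      using lim z by (intro tendsto_intros) auto
    moreover have "\<forall>l\<ge>N. \<bar>kev (gaussK \<sigma>) (ps l) z - kev (gaussK \<sigma>) (ps k) z\<bar> \<le> Cs * e"
    proof (intro allI impI)
      fix l assume l: "l \<ge> N"
      have "\<bar>kev (gaussK \<sigma>) (ps l) z - kev (gaussK \<sigma>) (ps k) z\<bar> = \<bar>kev (gaussK \<sigma>) (kdiff (ps k) (ps l)) z\<bar>"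
        by (simp add: kev_kdiff)
      also have "\<dots> \<le> Cs * sqrt (Qv \<sigma> (kdiff (ps k) (ps l)))"
        unfolding Cs_def by (rule kev_abs_bound[OF z sb])
      also have "\<dots> \<le> Cs * e"
      proof -
        have "sqrt (Qv \<sigma> (kdiff (ps k) (ps l))) < e" using N l unfolding k_def knorm_Qv by auto
        then show ?thesis using Cs0 by (intro mult_left_mono) auto
      qed
      finally show "\<bar>kev (gaussK \<sigma>) (ps l) z - kev (gaussK \<sigma>) (ps k) z\<bar> \<le> Cs * e" .
    qed
    ultimately show ?thesis by (intro LIMSEQ_le_const2) auto
  qed
  then show ?thesis using Q1 unfolding Cs_def by blast
qed

lemma rnd_lemma:
  fixes Cs h D :: real
  assumes h: "h > 0" and D: "\<bar>D\<bar> \<le> Cs"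
  defines "j \<equiv> nat \<lfloor>(D + Cs) / h\<rfloor>"
  shows "j \<le> nat \<lceil>2 * Cs / h\<rceil>" and "\<bar>D - (- Cs + real j * h)\<bar> \<le> h"
proof -
  have p: "(D + Cs) / h \<ge> 0" using D h by auto
  then have rj: "real j = of_int \<lfloor>(D + Cs) / h\<rfloor>" unfolding j_def by simp
  have a: "real j \<le> (D + Cs) / h" unfolding rj by linarith
  have b: "(D + Cs) / h < real j + 1" unfolding rj by linarith
  have "(D + Cs) / h \<le> 2 * Cs / h" using D h by (simp add: divide_right_mono)
  then have "real j \<le> of_int \<lceil>2 * Cs / h\<rceil>" using a by linarith
  then show "j \<le> nat \<lceil>2 * Cs / h\<rceil>" by linarith
  have "real j * h \<le> D + Cs" using a h by (simp add: field_simps)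
  moreover have "D + Cs < (real j + 1) * h" using b h by (simp add: field_simps)
  ultimately show "\<bar>D - (- Cs + real j * h)\<bar> \<le> h" by (simp add: algebra_simps)
qed

lemma entropy_bound:
  fixes \<epsilon> \<sigma> :: real and d :: nat
  assumes sig: "\<sigma> > 0" and eps: "\<epsilon> > 0" and d: "d > 0"
    and dc: "4 * exp 1 * cb \<sigma> TYPE('n::finite) \<le> real d"
    and small: "2 * sqrt (exp 1 * cb \<sigma> TYPE('n) / real d) ^ d \<le> \<epsilon> / 4"
  shows "0 \<le> entropy_C \<epsilon> (rkhs_ball (gaussK \<sigma> :: real^'n \<Rightarrow> real^'n \<Rightarrow> real) cube) cube"
    and "entropy_C \<epsilon> (rkhs_ball (gaussK \<sigma> :: real^'n \<Rightarrow> real^'n \<Rightarrow> real) cube) cube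
          \<le> real d ^ CARD('n) * ln (8 * (\<Sum>k. bt (cb \<sigma> TYPE('n)) k) * real d ^ CARD('n) / \<epsilon> + 2)"
proof -
  define c where "c = cb \<sigma> TYPE('n)"
  have c0: "c > 0" unfolding c_def by (rule cb_pos[OF sig])
  note bt = bt_tail[OF c0 d dc[folded c_def]]
  have sb: "summable (bt c)" by (rule bt(1))
  define Cs where "Cs = (\<Sum>k. bt c k)"
  have Cs0: "Cs \<ge> 0" unfolding Cs_def using sb c0 by (intro suminf_nonneg) (auto intro: bt_nonneg less_imp_le)
  define n where "n = CARD('n)"
  define h where "h = \<epsilon> / (4 * real d ^ n)"
  have h0: "h > 0" unfolding h_def using eps d by simp
  define J0 where "J0 = nat \<lceil>2 * Cs / h\<rceil>"
  define V where "V = (\<lambda>j. - Cs + real j * h) ` {..J0}"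
  define A where "A = (AA d :: ('n \<Rightarrow> nat) set)"
  have cA: "card A = d ^ n" unfolding A_def n_def by (rule card_AA)
  have fA: "finite A" unfolding A_def by simp
  define cen where "cen g z = ee \<sigma> z * (\<Sum>\<alpha>\<in>A. g \<alpha> * zpow z \<alpha>)" for g and z :: "real^'n"
  define CC where "CC = cen ` PiE A (\<lambda>_. V)"
  have fCC: "finite CC" unfolding CC_def V_def using fA by (intro finite_imageI finite_PiE) auto
  have "continuous_on UNIV (cen g)" for g unfolding cen_def
    by (intro continuous_on_mult cont_ee continuous_on_sum continuous_on_const cont_zpow)
  then have contCC: "\<forall>cc\<in>CC. continuous_on cube cc"
    unfolding CC_def using continuous_on_subset by blast
  define rnd where "rnd D = - Cs + real (nat \<lfloor>(D + Cs) / h\<rfloor>) * h" for D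
  have rnd: "rnd D \<in> V" "\<bar>D - rnd D\<bar> \<le> h" if "\<bar>D\<bar> \<le> Cs" for D
    using rnd_lemma[OF h0 that] unfolding rnd_def V_def J0_def by auto
  have cover: "\<forall>f\<in>rkhs_ball (gaussK \<sigma> :: real^'n \<Rightarrow> real^'n \<Rightarrow> real) cube. \<exists>cc\<in>CC. \<exists>\<delta><\<epsilon>. \<forall>x\<in>cube. \<bar>f x - cc x\<bar> \<le> \<delta>"
  proof
    fix f assume f: "f \<in> rkhs_ball (gaussK \<sigma> :: real^'n \<Rightarrow> real^'n \<Rightarrow> real) cube"
    define e where "e = \<epsilon> / (4 * (Cs + 1))"
    have e0: "e > 0" unfolding e_def using eps Cs0 by simp
    obtain ps :: "(real \<times> (real^'n)) list" where Q1: "Qv \<sigma> ps \<le> 1"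
      and app: "\<forall>z\<in>cube. \<bar>f z - kev (gaussK \<sigma>) ps z\<bar> \<le> Cs * e"
      using approx_ball[OF sig sb[unfolded c_def] f e0] unfolding Cs_def c_def by blast
    have Cse: "Cs * e \<le> \<epsilon> / 4" unfolding e_def using Cs0 eps by (simp add: field_simps)
    have Dcb: "\<bar>Dc \<sigma> ps d \<alpha>\<bar> \<le> Cs" for \<alpha>
    proof -
      have "\<bar>Dc \<sigma> ps d \<alpha>\<bar> \<le> Cs * sqrt (Qv \<sigma> ps)"
        unfolding Cs_def c_def by (rule Dc_bound[OF sig sb[unfolded c_def]])
      also have "\<dots> \<le> Cs * 1" using Q1 Cs0 by (intro mult_left_mono) auto
      finally show ?thesis by simp
    qed
    define g where "g = restrict (\<lambda>\<alpha>. rnd (Dc \<sigma> ps d \<alpha>)) A"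
    have gP: "g \<in> PiE A (\<lambda>_. V)" unfolding g_def using rnd(1)[OF Dcb] by auto
    have "\<forall>x\<in>cube. \<bar>f x - cen g x\<bar> \<le> 3 * \<epsilon> / 4"
    proof
      fix z :: "real^'n" assume z: "z \<in> cube"
      have "kev (gaussK \<sigma>) ps z - cen g z = ee \<sigma> z * (\<Sum>\<alpha>\<in>A. (Dc \<sigma> ps d \<alpha> - g \<alpha>) * zpow z \<alpha>) + (\<Sum>k. Tm \<sigma> ps z (k + d))"
        unfolding kev_split[of \<sigma> ps z d] cen_def A_def by (simp add: algebra_simps sum_subtractf)
      moreover have "\<bar>ee \<sigma> z * (\<Sum>\<alpha>\<in>A. (Dc \<sigma> ps d \<alpha> - g \<alpha>) * zpow z \<alpha>)\<bar> \<le> \<epsilon> / 4"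
      proof -
        have "\<bar>ee \<sigma> z * (\<Sum>\<alpha>\<in>A. (Dc \<sigma> ps d \<alpha> - g \<alpha>) * zpow z \<alpha>)\<bar> \<le> 1 * (\<Sum>\<alpha>\<in>A. \<bar>(Dc \<sigma> ps d \<alpha> - g \<alpha>) * zpow z \<alpha>\<bar>)"
          unfolding abs_mult[of "ee \<sigma> z"] using ee_pos[of \<sigma> z] ee_le1[of \<sigma> z]
          by (intro mult_mono sum_abs) auto
        also have "\<dots> \<le> (\<Sum>\<alpha>\<in>A. h)"
          unfolding mult_1
        proof (rule sum_mono)
          fix \<alpha> assume "\<alpha> \<in> A"
          then have "\<bar>Dc \<sigma> ps d \<alpha> - g \<alpha>\<bar> \<le> h" unfolding g_def using rnd(2)[OF Dcb] by auto
          then show "\<bar>(Dc \<sigma> ps d \<alpha> - g \<alpha>) * zpow z \<alpha>\<bar> \<le> h"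
            unfolding abs_mult using abs_zpow_le1[OF z, of \<alpha>] h0
            using mult_mono[of "\<bar>Dc \<sigma> ps d \<alpha> - g \<alpha>\<bar>" h "\<bar>zpow z \<alpha>\<bar>" 1] by simp
        qed
        also have "\<dots> = \<epsilon> / 4" unfolding h_def using cA d by simp
        finally show ?thesis .
      qed
      moreover have "\<bar>\<Sum>k. Tm \<sigma> ps z (k + d)\<bar> \<le> \<epsilon> / 4"
      proof -
        have "\<bar>\<Sum>k. Tm \<sigma> ps z (k + d)\<bar> \<le> (\<Sum>k. bt c (k + d)) * sqrt (Qv \<sigma> ps)"
          unfolding c_def by (rule tail_bound[OF z sb[unfolded c_def]])
        also have "\<dots> \<le> (\<Sum>k. bt c (k + d)) * 1"
          using Q1 Qv_nonneg[of \<sigma> ps] sb c0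
          by (intro mult_left_mono) (auto intro!: suminf_nonneg bt_nonneg simp: summable_iff_shift)
        also have "\<dots> \<le> \<epsilon> / 4" using bt(2) small unfolding c_def by simp
        finally show ?thesis .
      qed
      moreover have "\<bar>f z - kev (gaussK \<sigma>) ps z\<bar> \<le> \<epsilon> / 4" using app z Cse by auto
      ultimately show "\<bar>f z - cen g z\<bar> \<le> 3 * \<epsilon> / 4" by linarith
    qed
    moreover have "3 * \<epsilon> / 4 < \<epsilon>" using eps by simp
    ultimately show "\<exists>cc\<in>CC. \<exists>\<delta><\<epsilon>. \<forall>x\<in>cube. \<bar>f x - cc x\<bar> \<le> \<delta>"
      using gP unfolding CC_def by blast
  qed
  define L where "L = (LEAST N. \<exists>C. finite C \<and> card C = N \<and> (\<forall>c\<in>C. continuous_on cube c)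
       \<and> (\<forall>f\<in>rkhs_ball (gaussK \<sigma> :: real^'n \<Rightarrow> real^'n \<Rightarrow> real) cube. \<exists>c\<in>C. \<exists>\<delta><\<epsilon>. \<forall>x\<in>cube. \<bar>f x - c x\<bar> \<le> \<delta>))"
  have ent: "entropy_C \<epsilon> (rkhs_ball (gaussK \<sigma> :: real^'n \<Rightarrow> real^'n \<Rightarrow> real) cube) cube = ln (real L)"
    unfolding entropy_C_def L_def ..
  have LC: "L \<le> card CC" unfolding L_def
    by (rule Least_le) (use fCC contCC cover in blast)
  have "card CC \<le> card (PiE A (\<lambda>_. V))" unfolding CC_def by (rule card_image_le) (use fA V_def in \<open>auto intro: finite_PiE\<close>)
  also have "\<dots> = card V ^ card A" using fA by (simp add: card_PiE)
  also have "\<dots> \<le> (J0 + 1) ^ card A"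
    by (intro power_mono) (auto simp: V_def intro: order_trans[OF card_image_le])
  finally have CCb: "card CC \<le> (J0 + 1) ^ (d ^ n)" unfolding cA .
  show "0 \<le> entropy_C \<epsilon> (rkhs_ball (gaussK \<sigma> :: real^'n \<Rightarrow> real^'n \<Rightarrow> real) cube) cube"
    unfolding ent by (cases "L = 0") auto
  have J0b: "real (J0 + 1) \<le> 8 * Cs * real d ^ n / \<epsilon> + 2"
  proof -
    have x0: "2 * Cs / h \<ge> 0" using Cs0 h0 by simp
    then have "real J0 = of_int \<lceil>2 * Cs / h\<rceil>" unfolding J0_def by simp
    also have "\<dots> \<le> 2 * Cs / h + 1" by (rule of_int_ceiling_le_add_one)
    finally have "real J0 \<le> 2 * Cs / h + 1" .
    also have "2 * Cs / h = 8 * Cs * real d ^ n / \<epsilon>" unfolding h_def using eps d by (simp add: field_simps)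
    finally show ?thesis by simp
  qed
  have "ln (real L) \<le> real d ^ n * ln (8 * Cs * real d ^ n / \<epsilon> + 2)"
  proof (cases "L = 0")
    case True
    then show ?thesis using Cs0 eps by (simp add: divide_nonneg_pos)
  next
    case False
    have "ln (real L) \<le> ln (real ((J0 + 1) ^ (d ^ n)))"
    proof -
      have "L \<le> (J0 + 1) ^ (d ^ n)" using LC CCb by linarith
      then have "real L \<le> real ((J0 + 1) ^ (d ^ n))" by (rule of_nat_mono)
      then show ?thesis using False by (subst ln_le_cancel_iff) auto
    qed
    also have "\<dots> = real (d ^ n) * ln (real (J0 + 1))" by (simp add: ln_realpow)
    also have "\<dots> \<le> real d ^ n * ln (8 * Cs * real d ^ n / \<epsilon> + 2)"
      using J0b by (simp del: of_nat_Suc) (intro mult_left_mono ln_mono, auto)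
    finally show ?thesis .
  qed
  then show "entropy_C \<epsilon> (rkhs_ball (gaussK \<sigma> :: real^'n \<Rightarrow> real^'n \<Rightarrow> real) cube) cube
          \<le> real d ^ CARD('n) * ln (8 * (\<Sum>k. bt (cb \<sigma> TYPE('n)) k) * real d ^ CARD('n) / \<epsilon> + 2)"
    unfolding ent Cs_def c_def n_def .
qed

abbreviation "MC \<equiv> lebesgue_on (cube :: (real^'n::finite) set)"

lemma integrable_const_MC[simp]: "integrable (MC :: (real^'n::finite) measure) (\<lambda>x. c::real)"
  using finite_measure.integrable_const[OF fm_cube] .

lemma L2_integrable:
  assumes "L2_on cube (\<phi> :: real^'n::finite \<Rightarrow> real)"
  shows "integrable MC \<phi>"
proof (rule Bochner_Integration.integrable_bound[where f="\<lambda>x. 1 + (\<phi> x)\<^sup>2"])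
  show "integrable MC (\<lambda>x. 1 + (\<phi> x)\<^sup>2)" using assms unfolding L2_on_def by simp
  show "\<phi> \<in> borel_measurable MC" using assms unfolding L2_on_def by simp
  show "AE x in MC. norm (\<phi> x) \<le> norm (1 + (\<phi> x)\<^sup>2)"
  proof (rule AE_I2)
    fix x
    have "\<bar>\<phi> x\<bar> \<le> 1 + (\<phi> x)\<^sup>2"
    proof (cases "\<bar>\<phi> x\<bar> \<le> 1")
      case True then show ?thesis by (simp add: add_increasing2)
    next
      case False
      then have "\<bar>\<phi> x\<bar> * 1 \<le> \<bar>\<phi> x\<bar> * \<bar>\<phi> x\<bar>" by (intro mult_left_mono) auto
      then show ?thesis by (simp add: power2_eq_square abs_mult_self_eq)
    qed
    then show "norm (\<phi> x) \<le> norm (1 + (\<phi> x)\<^sup>2)" by simp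
  qed
qed

lemma L2_mult_integrable:
  assumes "L2_on cube (\<phi> :: real^'n::finite \<Rightarrow> real)" "L2_on cube \<psi>"
  shows "integrable MC (\<lambda>x. \<phi> x * \<psi> x)"
proof (rule Bochner_Integration.integrable_bound[where f="\<lambda>x. (\<phi> x)\<^sup>2 + (\<psi> x)\<^sup>2"])
  show "integrable MC (\<lambda>x. (\<phi> x)\<^sup>2 + (\<psi> x)\<^sup>2)" using assms unfolding L2_on_def by simp
  show "(\<lambda>x. \<phi> x * \<psi> x) \<in> borel_measurable MC" using assms unfolding L2_on_def by (auto intro: borel_measurable_times)
  show "AE x in MC. norm (\<phi> x * \<psi> x) \<le> norm ((\<phi> x)\<^sup>2 + (\<psi> x)\<^sup>2)"
  proof (rule AE_I2)
    fix x
    have "0 \<le> (\<bar>\<phi> x\<bar> - \<bar>\<psi> x\<bar>)\<^sup>2" by simp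
    then have "2 * (\<bar>\<phi> x\<bar> * \<bar>\<psi> x\<bar>) \<le> (\<phi> x)\<^sup>2 + (\<psi> x)\<^sup>2"
      by (simp add: power2_eq_square algebra_simps)
    moreover have "0 \<le> \<bar>\<phi> x\<bar> * \<bar>\<psi> x\<bar>" by simp
    ultimately have "\<bar>\<phi> x * \<psi> x\<bar> \<le> (\<phi> x)\<^sup>2 + (\<psi> x)\<^sup>2"
      unfolding abs_mult by linarith
    then show "norm (\<phi> x * \<psi> x) \<le> norm ((\<phi> x)\<^sup>2 + (\<psi> x)\<^sup>2)" by simp
  qed
qed

lemma bmult_integrable:
  fixes g \<phi> :: "real^'n::finite \<Rightarrow> real"
  assumes "integrable MC \<phi>" "continuous_on UNIV g" "\<And>x. x \<in> cube \<Longrightarrow> \<bar>g x\<bar> \<le> B"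
  shows "integrable MC (\<lambda>x. g x * \<phi> x)"
proof (rule Bochner_Integration.integrable_bound[where f="\<lambda>x. B * \<phi> x"])
  show "integrable MC (\<lambda>x. B * \<phi> x)" using assms by simp
  show "(\<lambda>x. g x * \<phi> x) \<in> borel_measurable MC"
    using cont_meas[OF assms(2)] borel_measurable_integrable[OF assms(1)] by measurable
  show "AE x in MC. norm (g x * \<phi> x) \<le> norm (B * \<phi> x)"
  proof (rule AE_I2)
    fix x :: "real^'n" assume "x \<in> space MC"
    then have x: "x \<in> cube" by simp
    have "\<bar>g x\<bar> * \<bar>\<phi> x\<bar> \<le> B * \<bar>\<phi> x\<bar>" using assms(3)[OF x] by (intro mult_right_mono) auto
    moreover have "B \<ge> 0" using assms(3)[OF x] by linarith
    ultimately show "norm (g x * \<phi> x) \<le> norm (B * \<phi> x)" by (simp add: abs_mult)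
  qed
qed

definition U :: "real \<Rightarrow> (nat \<Rightarrow> 'n) \<Rightarrow> nat \<Rightarrow> (real^'n::finite \<Rightarrow> real) \<Rightarrow> real" where
  "U \<sigma> s k \<phi> = (LINT y | MC. ee \<sigma> y * monm y s k * \<phi> y)"

definition U' :: "real \<Rightarrow> ('n \<Rightarrow> nat) \<Rightarrow> (real^'n::finite \<Rightarrow> real) \<Rightarrow> real" where
  "U' \<sigma> \<alpha> \<phi> = (LINT y | MC. ee \<sigma> y * zpow y \<alpha> * \<phi> y)"

lemma U_U': "U \<sigma> s k \<phi> = U' \<sigma> (pat s k) \<phi>"
  unfolding U_def U'_def mono_pat ..

lemma cont_em: "continuous_on UNIV (\<lambda>y. ee \<sigma> y * monm y s k)"
  by (intro continuous_on_mult cont_ee cont_mono)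

lemma abs_em: "y \<in> cube \<Longrightarrow> \<bar>ee \<sigma> y * monm y s k\<bar> \<le> 1"
  using ee_pos[of \<sigma> y] ee_le1[of \<sigma> y] abs_mono_le1[of y s k]
  by (simp add: abs_mult mult_le_one)

lemma U_integrable: "integrable MC \<phi> \<Longrightarrow> integrable MC (\<lambda>y. ee \<sigma> y * monm y s k * \<phi> y)"
  by (rule bmult_integrable[OF _ cont_em abs_em])

lemma U_bound:
  assumes "integrable MC (\<phi> :: real^'n::finite \<Rightarrow> real)"
  shows "\<bar>U \<sigma> s k \<phi>\<bar> \<le> (LINT y | MC. \<bar>\<phi> y\<bar>)"
proof -
  have "\<bar>U \<sigma> s k \<phi>\<bar> \<le> (LINT y | MC. \<bar>ee \<sigma> y * monm y s k * \<phi> y\<bar>)"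
    unfolding U_def by (rule integral_abs_bound)
  also have "\<dots> \<le> (LINT y | MC. \<bar>\<phi> y\<bar>)"
  proof (rule integral_mono)
    show "integrable MC (\<lambda>y. \<bar>ee \<sigma> y * monm y s k * \<phi> y\<bar>)" using U_integrable[OF assms] by simp
    show "integrable MC (\<lambda>y. \<bar>\<phi> y\<bar>)" using assms by simp
    fix y :: "real^'n" assume "y \<in> space MC"
    then have "\<bar>ee \<sigma> y * monm y s k\<bar> \<le> 1" by (intro abs_em) simp
    then show "\<bar>ee \<sigma> y * monm y s k * \<phi> y\<bar> \<le> \<bar>\<phi> y\<bar>"
      by (simp add: abs_mult mult_left_le_one_le)
  qed
  finally show ?thesis .
qed

lemma ak_n_sums: "(\<lambda>k. ak \<sigma> k * real CARD('n::finite) ^ k) sums exp (2 * \<sigma>\<^sup>2 * real CARD('n))"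
  by (rule exp_ak_sums)

lemma sum_monm_bound:
  assumes "x \<in> cube"
  shows "(\<Sum>s\<in>SS k. \<bar>monm (x :: real^'n::finite) s k\<bar> * c) \<le> real CARD('n) ^ k * \<bar>c\<bar>"
proof -
  have "(\<Sum>s\<in>SS k. \<bar>monm (x :: real^'n::finite) s k\<bar> * c) \<le> (\<Sum>s\<in>(SS k :: (nat \<Rightarrow> 'n) set). \<bar>c\<bar>)"
  proof (rule sum_mono)
    fix s
    have "\<bar>monm x s k\<bar> * c \<le> \<bar>monm x s k\<bar> * \<bar>c\<bar>" by (intro mult_left_mono) auto
    also have "\<dots> \<le> 1 * \<bar>c\<bar>" using abs_mono_le1[OF assms] by (intro mult_right_mono) auto
    finally show "\<bar>monm x s k\<bar> * c \<le> \<bar>c\<bar>" by simp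
  qed
  also have "\<dots> = real CARD('n) ^ k * \<bar>c\<bar>" by (simp add: card_SS)
  finally show ?thesis .
qed

lemma intop_sums:
  fixes \<phi> :: "real^'n::finite \<Rightarrow> real"
  assumes int: "integrable MC \<phi>" and x: "x \<in> cube"
  shows "(\<lambda>k. ee \<sigma> x * (ak \<sigma> k * (\<Sum>s\<in>SS k. monm x s k * U \<sigma> s k \<phi>))) sums intop (gaussK \<sigma>) cube \<phi> x"
proof -
  define f where "f k y = (\<Sum>s\<in>SS k. (ee \<sigma> x * ak \<sigma> k * monm x s k) * (ee \<sigma> y * monm y s k * \<phi> y))" for k y
  have fint: "integrable MC (f k)" for k
    unfolding f_def[abs_def] apply (rule Bochner_Integration.integrable_sum) apply (rule integrable_mult_right) by (rule U_integrable[OF int])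
  have fsum: "(\<lambda>k. f k y) sums (gaussK \<sigma> x y * \<phi> y)" for y
  proof -
    have "(\<lambda>k. ee \<sigma> x * ee \<sigma> y * (ak \<sigma> k * (\<Sum>s\<in>SS k. monm x s k * monm y s k)) * \<phi> y) sums (gaussK \<sigma> x y * \<phi> y)"
      by (intro sums_mult2 gauss_sums)
    moreover have "(\<lambda>k. ee \<sigma> x * ee \<sigma> y * (ak \<sigma> k * (\<Sum>s\<in>SS k. monm x s k * monm y s k)) * \<phi> y) = (\<lambda>k. f k y)"
      unfolding f_def by (auto simp: sum_distrib_left sum_distrib_right algebra_simps intro!: sum.cong ext)
    ultimately show ?thesis by simp
  qed
  have fbound: "\<bar>f k y\<bar> \<le> ak \<sigma> k * real CARD('n) ^ k * \<bar>\<phi> y\<bar>" if y: "y \<in> cube" for k y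
  proof -
    have "\<bar>f k y\<bar> \<le> (\<Sum>s\<in>SS k. \<bar>(ee \<sigma> x * ak \<sigma> k * monm x s k) * (ee \<sigma> y * monm y s k * \<phi> y)\<bar>)"
      unfolding f_def by (rule sum_abs)
    also have "\<dots> \<le> (\<Sum>s\<in>SS k. ak \<sigma> k * (\<bar>monm x s k\<bar> * \<bar>\<phi> y\<bar>))"
    proof (rule sum_mono)
      fix s
      have a: "\<bar>ee \<sigma> y * monm y s k * \<phi> y\<bar> \<le> \<bar>\<phi> y\<bar>"
        using abs_em[OF y, of \<sigma> s k] by (simp add: abs_mult mult_left_le_one_le)
      have "\<bar>(ee \<sigma> x * ak \<sigma> k * monm x s k) * (ee \<sigma> y * monm y s k * \<phi> y)\<bar>
          = ee \<sigma> x * (ak \<sigma> k * \<bar>monm x s k\<bar>) * \<bar>ee \<sigma> y * monm y s k * \<phi> y\<bar>"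
        using ee_pos[of \<sigma> x] ak_pos[of \<sigma> k] by (simp add: abs_mult)
      also have "\<dots> \<le> 1 * (ak \<sigma> k * \<bar>monm x s k\<bar>) * \<bar>\<phi> y\<bar>"
        using ee_le1[of \<sigma> x] ak_pos[of \<sigma> k] a by (intro mult_mono) auto
      finally show "\<bar>(ee \<sigma> x * ak \<sigma> k * monm x s k) * (ee \<sigma> y * monm y s k * \<phi> y)\<bar> \<le> ak \<sigma> k * (\<bar>monm x s k\<bar> * \<bar>\<phi> y\<bar>)"
        by simp
    qed
    also have "\<dots> = ak \<sigma> k * (\<Sum>s\<in>SS k. \<bar>monm x s k\<bar> * \<bar>\<phi> y\<bar>)" by (simp add: sum_distrib_left)
    also have "\<dots> \<le> ak \<sigma> k * (real CARD('n) ^ k * \<bar>\<bar>\<phi> y\<bar>\<bar>)"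
      by (intro mult_left_mono sum_monm_bound[OF x] ak_pos)
    finally show ?thesis by simp
  qed
  have sA: "summable (\<lambda>k. ak \<sigma> k * real CARD('n) ^ k)" using ak_n_sums by (rule sums_summable)
  have "(\<lambda>k. integral\<^sup>L MC (f k)) sums (LINT y|MC. (\<Sum>k. f k y))"
  proof (rule sums_integral)
    show "integrable MC (f k)" for k by (rule fint)
    show "AE y in MC. summable (\<lambda>k. norm (f k y))"
    proof (rule AE_I2)
      fix y :: "real^'n" assume "y \<in> space MC"
      then have y: "y \<in> cube" by simp
      show "summable (\<lambda>k. norm (f k y))"
        by (rule summable_comparison_test[OF _ summable_mult2[OF sA, of "\<bar>\<phi> y\<bar>"]]) (use fbound[OF y] in auto)
    qed
    show "summable (\<lambda>k. LINT y|MC. norm (f k y))"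
    proof (rule summable_comparison_test[OF _ summable_mult2[OF sA, of "LINT y|MC. \<bar>\<phi> y\<bar>"]], intro exI allI impI)
      fix k :: nat
      have "(LINT y|MC. norm (f k y)) \<le> (LINT y|MC. ak \<sigma> k * real CARD('n) ^ k * \<bar>\<phi> y\<bar>)"
        using fint int by (intro integral_mono) (auto intro: fbound)
      also have "\<dots> = ak \<sigma> k * real CARD('n) ^ k * (LINT y|MC. \<bar>\<phi> y\<bar>)" by simp
      finally show "norm (LINT y|MC. norm (f k y)) \<le> ak \<sigma> k * real CARD('n) ^ k * (LINT y|MC. \<bar>\<phi> y\<bar>)"
        by simp
    qed
  qed
  moreover have "(LINT y|MC. (\<Sum>k. f k y)) = intop (gaussK \<sigma>) cube \<phi> x"
    unfolding intop_def using fsum by (intro Bochner_Integration.integral_cong) (auto simp: sums_iff)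
  moreover have "integral\<^sup>L MC (f k) = ee \<sigma> x * (ak \<sigma> k * (\<Sum>s\<in>SS k. monm x s k * U \<sigma> s k \<phi>))" for k
  proof -
    have "integral\<^sup>L MC (f k) = (\<Sum>s\<in>SS k. (ee \<sigma> x * ak \<sigma> k * monm x s k) * U \<sigma> s k \<phi>)"
      unfolding f_def U_def
      by (subst Bochner_Integration.integral_sum) (auto intro: integrable_mult_right U_integrable int)
    then show ?thesis by (simp add: sum_distrib_left algebra_simps)
  qed
  ultimately show ?thesis by simp
qed

lemma Qf_sums:
  fixes \<phi> \<psi> :: "real^'n::finite \<Rightarrow> real"
  assumes i\<phi>: "integrable MC \<phi>" and i\<psi>: "integrable MC \<psi>"
  shows "(\<lambda>k. ak \<sigma> k * (\<Sum>s\<in>SS k. U \<sigma> s k \<phi> * U \<sigma> s k \<psi>)) sums (LINT x|MC. \<psi> x * intop (gaussK \<sigma>) cube \<phi> x)"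
    and "(\<lambda>x. \<psi> x * intop (gaussK \<sigma>) cube \<phi> x) \<in> borel_measurable MC"
proof -
  define g where "g k x = (\<Sum>s\<in>SS k. (ak \<sigma> k * U \<sigma> s k \<phi>) * (ee \<sigma> x * monm x s k * \<psi> x))" for k x
  define I where "I = (LINT y|MC. \<bar>\<phi> y\<bar>)"
  have gint: "integrable MC (g k)" for k
    unfolding g_def[abs_def] apply (rule Bochner_Integration.integrable_sum) apply (rule integrable_mult_right) by (rule U_integrable[OF i\<psi>])
  have gsum: "(\<lambda>k. g k x) sums (\<psi> x * intop (gaussK \<sigma>) cube \<phi> x)" if x: "x \<in> cube" for x
  proof -
    have "(\<lambda>k. \<psi> x * (ee \<sigma> x * (ak \<sigma> k * (\<Sum>s\<in>SS k. monm x s k * U \<sigma> s k \<phi>)))) sums (\<psi> x * intop (gaussK \<sigma>) cube \<phi> x)"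
      by (intro sums_mult intop_sums[OF i\<phi> x])
    moreover have "(\<lambda>k. \<psi> x * (ee \<sigma> x * (ak \<sigma> k * (\<Sum>s\<in>SS k. monm x s k * U \<sigma> s k \<phi>)))) = (\<lambda>k. g k x)"
      unfolding g_def by (auto simp: sum_distrib_left algebra_simps intro!: sum.cong ext)
    ultimately show ?thesis by simp
  qed
  have gbound: "\<bar>g k x\<bar> \<le> ak \<sigma> k * real CARD('n) ^ k * I * \<bar>\<psi> x\<bar>" if x: "x \<in> cube" for k x
  proof -
    have "\<bar>g k x\<bar> \<le> (\<Sum>s\<in>SS k. \<bar>(ak \<sigma> k * U \<sigma> s k \<phi>) * (ee \<sigma> x * monm x s k * \<psi> x)\<bar>)"
      unfolding g_def by (rule sum_abs)
    also have "\<dots> \<le> (\<Sum>s\<in>(SS k :: (nat \<Rightarrow> 'n) set). ak \<sigma> k * I * \<bar>\<psi> x\<bar>)"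
    proof (rule sum_mono)
      fix s
      have a: "\<bar>ee \<sigma> x * monm x s k * \<psi> x\<bar> \<le> \<bar>\<psi> x\<bar>"
        using abs_em[OF x, of \<sigma> s k] by (simp add: abs_mult mult_left_le_one_le)
      have b: "\<bar>ak \<sigma> k * U \<sigma> s k \<phi>\<bar> \<le> ak \<sigma> k * I"
        unfolding I_def using U_bound[OF i\<phi>, of \<sigma> s k] ak_pos[of \<sigma> k] by (simp add: abs_mult mult_left_mono)
      show "\<bar>(ak \<sigma> k * U \<sigma> s k \<phi>) * (ee \<sigma> x * monm x s k * \<psi> x)\<bar> \<le> ak \<sigma> k * I * \<bar>\<psi> x\<bar>"
        unfolding abs_mult[of "ak \<sigma> k * U \<sigma> s k \<phi>"] by (rule mult_mono[OF b a]) (use ak_pos[of \<sigma> k] in \<open>auto simp: I_def\<close>)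
    qed
    also have "\<dots> = ak \<sigma> k * real CARD('n) ^ k * I * \<bar>\<psi> x\<bar>" by (simp add: card_SS)
    finally show ?thesis .
  qed
  have sA: "summable (\<lambda>k. ak \<sigma> k * real CARD('n) ^ k)" using ak_n_sums by (rule sums_summable)
  have sA2: "summable (\<lambda>k. ak \<sigma> k * real CARD('n) ^ k * c)" for c by (rule summable_mult2[OF sA])
  have as: "AE x in MC. summable (\<lambda>k. norm (g k x))"
  proof (rule AE_I2)
    fix x :: "real^'n" assume "x \<in> space MC"
    then have x: "x \<in> cube" by simp
    show "summable (\<lambda>k. norm (g k x))"
      by (rule summable_comparison_test[OF _ sA2[of "I * \<bar>\<psi> x\<bar>"]]) (use gbound[OF x] in \<open>auto simp: mult.assoc\<close>)
  qed
  have is2: "summable (\<lambda>k. LINT x|MC. norm (g k x))"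
  proof (rule summable_comparison_test[OF _ sA2[of "I * (LINT x|MC. \<bar>\<psi> x\<bar>)"]], intro exI allI impI)
    fix k :: nat
    have "(LINT x|MC. norm (g k x)) \<le> (LINT x|MC. ak \<sigma> k * real CARD('n) ^ k * I * \<bar>\<psi> x\<bar>)"
      using gint i\<psi> by (intro integral_mono) (auto intro: gbound)
    also have "\<dots> = ak \<sigma> k * real CARD('n) ^ k * (I * (LINT x|MC. \<bar>\<psi> x\<bar>))" by simp
    finally show "norm (LINT x|MC. norm (g k x)) \<le> ak \<sigma> k * real CARD('n) ^ k * (I * (LINT x|MC. \<bar>\<psi> x\<bar>))"
      by simp
  qed
  have "(\<lambda>k. integral\<^sup>L MC (g k)) sums (LINT x|MC. (\<Sum>k. g k x))"
    by (rule sums_integral[OF gint as is2])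
  moreover have eqc: "(LINT x|MC. (\<Sum>k. g k x)) = (LINT x|MC. \<psi> x * intop (gaussK \<sigma>) cube \<phi> x)"
    using gsum by (intro Bochner_Integration.integral_cong) (auto simp: sums_iff)
  moreover have "integral\<^sup>L MC (g k) = ak \<sigma> k * (\<Sum>s\<in>SS k. U \<sigma> s k \<phi> * U \<sigma> s k \<psi>)" for k
  proof -
    have "integral\<^sup>L MC (g k) = (\<Sum>s\<in>SS k. (ak \<sigma> k * U \<sigma> s k \<phi>) * U \<sigma> s k \<psi>)"
      unfolding g_def U_def[of _ _ _ \<psi>]
      by (subst Bochner_Integration.integral_sum) (auto intro: integrable_mult_right U_integrable i\<psi>)
    then show ?thesis by (simp add: sum_distrib_left algebra_simps)
  qed
  ultimately show "(\<lambda>k. ak \<sigma> k * (\<Sum>s\<in>SS k. U \<sigma> s k \<phi> * U \<sigma> s k \<psi>)) sums (LINT x|MC. \<psi> x * intop (gaussK \<sigma>) cube \<phi> x)"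
    by simp
  have "integrable MC (\<lambda>x. (\<Sum>k. g k x))" by (rule integrable_suminf[OF gint as is2])
  then have "(\<lambda>x. (\<Sum>k. g k x)) \<in> borel_measurable MC" by (rule borel_measurable_integrable)
  then show "(\<lambda>x. \<psi> x * intop (gaussK \<sigma>) cube \<phi> x) \<in> borel_measurable MC"
    by (rule measurable_cong[THEN iffD1, rotated]) (use gsum in \<open>auto simp: sums_iff\<close>)
qed

lemma CS_cube:
  fixes F :: "real^'n::finite \<Rightarrow> real"
  assumes iF: "integrable MC F" and iF2: "integrable MC (\<lambda>x. (F x)\<^sup>2)"
  shows "(LINT x|MC. \<bar>F x\<bar>)\<^sup>2 \<le> 2 ^ CARD('n) * (LINT x|MC. (F x)\<^sup>2)"
proof -
  define V :: real where "V = 2 ^ CARD('n)"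
  have V0: "V > 0" unfolding V_def by simp
  have mV: "measure (MC :: (real^'n) measure) (space (MC :: (real^'n) measure)) = V" unfolding V_def by (simp add: measure_cube)
  define a where "a = (LINT x|MC. \<bar>F x\<bar>)"
  define c where "c = a / V"
  have "0 \<le> (LINT x|MC. (\<bar>F x\<bar> - c)\<^sup>2)" by (intro integral_nonneg_AE) auto
  also have "(LINT x|MC. (\<bar>F x\<bar> - c)\<^sup>2) = (LINT x|MC. (F x)\<^sup>2 + (- 2 * c) * \<bar>F x\<bar> + c\<^sup>2)"
    by (intro Bochner_Integration.integral_cong) (auto simp: power2_eq_square algebra_simps)
  also have "\<dots> = (LINT x|MC. (F x)\<^sup>2) + (- 2 * c) * a + V * c\<^sup>2"
    using iF iF2 mV unfolding a_def
    by (simp add: Bochner_Integration.integral_add)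
  finally have "0 \<le> (LINT x|MC. (F x)\<^sup>2) - a\<^sup>2 / V"
    unfolding c_def using V0 by (simp add: power2_eq_square field_simps)
  then show ?thesis using V0 unfolding a_def V_def[symmetric] by (simp add: field_simps)
qed

lemma eig_quad:
  fixes \<phi> \<psi> :: "real^'n::finite \<Rightarrow> real"
  assumes "L2_on cube \<phi>" "L2_on cube \<psi>"
    and eig: "AE x in MC. intop (gaussK \<sigma>) cube \<phi> x = \<mu> * \<phi> x"
  shows "(LINT x|MC. \<psi> x * intop (gaussK \<sigma>) cube \<phi> x) = \<mu> * (LINT x|MC. \<phi> x * \<psi> x)"
proof -
  have i: "integrable MC \<phi>" "integrable MC \<psi>" using assms L2_integrable by auto
  have "(LINT x|MC. \<psi> x * intop (gaussK \<sigma>) cube \<phi> x) = (LINT x|MC. \<mu> * (\<phi> x * \<psi> x))"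
  proof (rule integral_cong_AE)
    show "(\<lambda>x. \<psi> x * intop (gaussK \<sigma>) cube \<phi> x) \<in> borel_measurable MC" by (rule Qf_sums(2)[OF i])
    show "(\<lambda>x. \<mu> * (\<phi> x * \<psi> x)) \<in> borel_measurable MC"
      using borel_measurable_integrable[OF i(1)] borel_measurable_integrable[OF i(2)] by measurable
    show "AE x in MC. \<psi> x * intop (gaussK \<sigma>) cube \<phi> x = \<mu> * (\<phi> x * \<psi> x)"
      using eig by eventually_elim simp
  qed
  then show ?thesis by simp
qed

lemma Qf_sym:
  fixes \<phi> \<psi> :: "real^'n::finite \<Rightarrow> real"
  assumes "integrable MC \<phi>" "integrable MC \<psi>"
  shows "(LINT x|MC. \<psi> x * intop (gaussK \<sigma>) cube \<phi> x) = (LINT x|MC. \<phi> x * intop (gaussK \<sigma>) cube \<psi> x)"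
proof -
  have "(\<lambda>k. ak \<sigma> k * (\<Sum>s\<in>SS k. U \<sigma> s k \<phi> * U \<sigma> s k \<psi>)) sums (LINT x|MC. \<psi> x * intop (gaussK \<sigma>) cube \<phi> x)"
    by (rule Qf_sums(1)[OF assms])
  moreover have "(\<lambda>k. ak \<sigma> k * (\<Sum>s\<in>SS k. U \<sigma> s k \<psi> * U \<sigma> s k \<phi>)) sums (LINT x|MC. \<phi> x * intop (gaussK \<sigma>) cube \<psi> x)"
    by (rule Qf_sums(1)[OF assms(2,1)])
  ultimately show ?thesis by (simp add: mult.commute sums_unique2)
qed

lemma eig_orth:
  fixes \<phi> \<psi> :: "real^'n::finite \<Rightarrow> real"
  assumes "L2_on cube \<phi>" "L2_on cube \<psi>"
    and "AE x in MC. intop (gaussK \<sigma>) cube \<phi> x = \<mu> * \<phi> x"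
    and "AE x in MC. intop (gaussK \<sigma>) cube \<psi> x = \<nu> * \<psi> x"
    and "\<mu> \<noteq> \<nu>"
  shows "(LINT x|MC. \<phi> x * \<psi> x) = 0"
proof -
  have i: "integrable MC \<phi>" "integrable MC \<psi>" using assms L2_integrable by auto
  have "\<mu> * (LINT x|MC. \<phi> x * \<psi> x) = \<nu> * (LINT x|MC. \<psi> x * \<phi> x)"
    using eig_quad[OF assms(1,2,3)] eig_quad[OF assms(2,1,4)] Qf_sym[OF i] by simp
  then show ?thesis using assms(5) by (simp add: mult.commute)
qed

lemma eig_count:
  fixes \<sigma> \<epsilon> :: real and d :: nat and J :: "'p set" and \<psi> :: "'p \<Rightarrow> real^'n::finite \<Rightarrow> real" and \<mu> :: "'p \<Rightarrow> real"
  assumes fJ: "finite J"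
    and L2: "\<forall>p\<in>J. L2_on cube (\<psi> p)"
    and eig: "\<forall>p\<in>J. AE x in MC. intop (gaussK \<sigma>) cube (\<psi> p) x = \<mu> p * \<psi> p x"
    and gt: "\<forall>p\<in>J. \<mu> p > \<epsilon>"
    and on: "\<forall>p\<in>J. \<forall>q\<in>J. (LINT x|MC. \<psi> p x * \<psi> q x) = (if p = q then 1 else 0)"
    and tail: "2 ^ CARD('n) * (\<Sum>k. ak \<sigma> (k + d) * real CARD('n) ^ (k + d)) \<le> \<epsilon>"
  shows "card J \<le> d ^ CARD('n)"
proof (rule ccontr)
  assume "\<not> card J \<le> d ^ CARD('n)"
  then have cJ: "card (AA d :: ('n \<Rightarrow> nat) set) < card J" by (simp add: card_AA)
  obtain t where t0: "\<exists>p\<in>J. t p \<noteq> 0" and tA: "\<forall>\<alpha>\<in>(AA d :: ('n \<Rightarrow> nat) set). (\<Sum>p\<in>J. t p * U' \<sigma> \<alpha> (\<psi> p)) = 0"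
    using lin_dep[OF finite_AA fJ cJ, of "\<lambda>p \<alpha>. U' \<sigma> \<alpha> (\<psi> p)"] by blast
  define T where "T = (\<Sum>p\<in>J. (t p)\<^sup>2)"
  have T0: "T > 0" unfolding T_def using t0 fJ by (auto intro: sum_pos2)
  have i\<psi>: "integrable MC (\<psi> p)" if "p \<in> J" for p using L2 that L2_integrable by auto
  have i\<psi>2: "integrable MC (\<lambda>x. \<psi> p x * \<psi> q x)" if "p \<in> J" "q \<in> J" for p q
    using L2 that L2_mult_integrable by auto
  define F where "F y = (\<Sum>p\<in>J. t p * \<psi> p y)" for y
  have iF: "integrable MC F" unfolding F_def[abs_def]
    by (rule Bochner_Integration.integrable_sum) (intro integrable_mult_right i\<psi>)
  have F2: "(F x)\<^sup>2 = (\<Sum>p\<in>J. \<Sum>q\<in>J. t p * t q * (\<psi> p x * \<psi> q x))" for x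
    unfolding F_def power2_eq_square sum_distrib_left sum_distrib_right
    by (intro sum.cong refl) (simp add: algebra_simps)
  have iF2: "integrable MC (\<lambda>x. (F x)\<^sup>2)" unfolding F2
    by (intro Bochner_Integration.integrable_sum integrable_mult_right i\<psi>2)
  have intF2: "(LINT x|MC. (F x)\<^sup>2) = T"
  proof -
    have "(LINT x|MC. (F x)\<^sup>2) = (\<Sum>p\<in>J. \<Sum>q\<in>J. t p * t q * (LINT x|MC. \<psi> p x * \<psi> q x))"
      unfolding F2 by (simp add: Bochner_Integration.integral_sum integrable_mult_right i\<psi>2)
    also have "\<dots> = (\<Sum>p\<in>J. \<Sum>q\<in>J. if p = q then t p * t q else 0)"
      using on by (intro sum.cong refl) auto
    also have "\<dots> = T" unfolding T_def using fJ by (simp add: power2_eq_square)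
    finally show ?thesis .
  qed
  have UF: "U \<sigma> s k F = (\<Sum>p\<in>J. t p * U \<sigma> s k (\<psi> p))" for s k
  proof -
    have "U \<sigma> s k F = (LINT y|MC. (\<Sum>p\<in>J. t p * (ee \<sigma> y * monm y s k * \<psi> p y)))"
      unfolding U_def F_def by (simp add: sum_distrib_left algebra_simps)
    also have "\<dots> = (\<Sum>p\<in>J. t p * U \<sigma> s k (\<psi> p))"
      unfolding U_def by (simp add: Bochner_Integration.integral_sum integrable_mult_right U_integrable i\<psi>)
    finally show ?thesis .
  qed
  have Ubd: "(\<Sum>p\<in>J. t p * U \<sigma> s k (\<psi> p))\<^sup>2 \<le> 2 ^ CARD('n) * T" for s k
  proof -
    have "\<bar>U \<sigma> s k F\<bar> \<le> (LINT x|MC. \<bar>F x\<bar>)" by (rule U_bound[OF iF])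
    then have "(U \<sigma> s k F)\<^sup>2 \<le> (LINT x|MC. \<bar>F x\<bar>)\<^sup>2"
      by (metis abs_ge_zero abs_le_square_iff order_trans power2_abs abs_of_nonneg)
    also have "\<dots> \<le> 2 ^ CARD('n) * T" using CS_cube[OF iF iF2] intF2 by simp
    finally show ?thesis unfolding UF .
  qed
  define w where "w k = ak \<sigma> k * (\<Sum>s\<in>SS k. (\<Sum>p\<in>J. t p * U \<sigma> s k (\<psi> p))\<^sup>2)" for k
  define X where "X = (\<Sum>p\<in>J. \<Sum>q\<in>J. t p * t q * (LINT x|MC. \<psi> q x * intop (gaussK \<sigma>) cube (\<psi> p) x))"
  have wX: "w sums X"
  proof -
    have "(\<lambda>k. \<Sum>p\<in>J. \<Sum>q\<in>J. t p * t q * (ak \<sigma> k * (\<Sum>s\<in>SS k. U \<sigma> s k (\<psi> p) * U \<sigma> s k (\<psi> q)))) sums X"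
      unfolding X_def by (intro sums_sum sums_mult Qf_sums(1) i\<psi>)
    moreover have "(\<lambda>k. \<Sum>p\<in>J. \<Sum>q\<in>J. t p * t q * (ak \<sigma> k * (\<Sum>s\<in>SS k. U \<sigma> s k (\<psi> p) * U \<sigma> s k (\<psi> q)))) = w"
    proof
      fix k
      have "w k = (\<Sum>s\<in>SS k. \<Sum>p\<in>J. \<Sum>q\<in>J. ak \<sigma> k * ((t q * U \<sigma> s k (\<psi> q)) * (t p * U \<sigma> s k (\<psi> p))))"
        unfolding w_def power2_eq_square sum_distrib_right sum_distrib_left ..
      also have "\<dots> = (\<Sum>p\<in>J. \<Sum>q\<in>J. \<Sum>s\<in>SS k. ak \<sigma> k * ((t q * U \<sigma> s k (\<psi> q)) * (t p * U \<sigma> s k (\<psi> p))))"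
        by (rule swap3[symmetric])
      also have "\<dots> = (\<Sum>p\<in>J. \<Sum>q\<in>J. t p * t q * (ak \<sigma> k * (\<Sum>s\<in>SS k. U \<sigma> s k (\<psi> p) * U \<sigma> s k (\<psi> q))))"
        by (intro sum.cong refl) (simp add: sum_distrib_left algebra_simps)
      finally show "(\<Sum>p\<in>J. \<Sum>q\<in>J. t p * t q * (ak \<sigma> k * (\<Sum>s\<in>SS k. U \<sigma> s k (\<psi> p) * U \<sigma> s k (\<psi> q)))) = w k"
        by simp
    qed
    ultimately show ?thesis by simp
  qed
  have Xeq: "X = (\<Sum>p\<in>J. (t p)\<^sup>2 * \<mu> p)"
  proof -
    have "X = (\<Sum>p\<in>J. \<Sum>q\<in>J. t p * t q * (\<mu> p * (if p = q then 1 else 0)))"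
    proof -
      have "(LINT x|MC. \<psi> q x * intop (gaussK \<sigma>) cube (\<psi> p) x) = \<mu> p * (if p = q then 1 else 0)"
        if "p \<in> J" "q \<in> J" for p q
        using eig_quad[of "\<psi> p" "\<psi> q" \<sigma> "\<mu> p"] L2 eig on that by auto
      then show ?thesis unfolding X_def by (intro sum.cong refl) auto
    qed
    also have "\<dots> = (\<Sum>p\<in>J. \<Sum>q\<in>J. if p = q then t p * t q * \<mu> p else 0)"
      by (intro sum.cong refl) auto
    also have "\<dots> = (\<Sum>p\<in>J. (t p)\<^sup>2 * \<mu> p)" using fJ by (simp add: power2_eq_square)
    finally show ?thesis .
  qed
  have "X > \<epsilon> * T"
  proof -
    obtain p0 where p0: "p0 \<in> J" "t p0 \<noteq> 0" using t0 by blast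
    have "0 < (\<Sum>p\<in>J. (t p)\<^sup>2 * (\<mu> p - \<epsilon>))"
      using fJ gt p0 by (intro sum_pos2[of J p0]) auto
    then show ?thesis unfolding Xeq T_def by (simp add: algebra_simps sum_subtractf sum_distrib_left)
  qed
  moreover have "X \<le> \<epsilon> * T"
  proof -
    have w0: "w k = 0" if "k < d" for k
    proof -
      have "(\<Sum>p\<in>J. t p * U \<sigma> s k (\<psi> p)) = 0" for s
        unfolding U_U' using tA pat_AA[OF that] by blast
      then show ?thesis unfolding w_def by simp
    qed
    have wb: "w k \<le> ak \<sigma> k * real CARD('n) ^ k * (2 ^ CARD('n) * T)" for k
    proof -
      have "w k \<le> ak \<sigma> k * (\<Sum>s\<in>(SS k :: (nat \<Rightarrow> 'n) set). 2 ^ CARD('n) * T)"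
        unfolding w_def by (intro mult_left_mono sum_mono Ubd ak_pos)
      then show ?thesis by (simp add: card_SS)
    qed
    have sA: "summable (\<lambda>k. ak \<sigma> k * real CARD('n) ^ k)" using ak_n_sums by (rule sums_summable)
    have sAd: "summable (\<lambda>k. ak \<sigma> (k + d) * real CARD('n) ^ (k + d))"
      using summable_ignore_initial_segment[OF sA, of d] by simp
    have sw: "summable w" using wX by (rule sums_summable)
    have "X = (\<Sum>k. w (k + d)) + (\<Sum>k<d. w k)"
      using wX suminf_split_initial_segment[OF sw, of d] by (simp add: sums_iff)
    also have "(\<Sum>k<d. w k) = 0" using w0 by simp
    also have "(\<Sum>k. w (k + d)) \<le> (\<Sum>k. ak \<sigma> (k + d) * real CARD('n) ^ (k + d) * (2 ^ CARD('n) * T))"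
      by (intro suminf_le wb summable_mult2 sAd) (use sw in \<open>simp add: summable_iff_shift\<close>)
    also have "\<dots> = (\<Sum>k. ak \<sigma> (k + d) * real CARD('n) ^ (k + d)) * (2 ^ CARD('n) * T)"
      by (rule suminf_mult2[OF sAd, symmetric])
    also have "\<dots> \<le> \<epsilon> * T" using tail T0 by (simp add: mult_right_mono algebra_simps)
    finally show ?thesis by simp
  qed
  ultimately show False by simp
qed

lemma mcount_bound:
  fixes \<sigma> \<epsilon> :: real and d :: nat and lam :: "nat \<Rightarrow> real"
  assumes ev: "eigenvalue_seq (gaussK \<sigma> :: real^'n::finite \<Rightarrow> real^'n \<Rightarrow> real) cube lam"
    and eps: "\<epsilon> > 0"
    and tail: "2 ^ CARD('n) * (\<Sum>k. ak \<sigma> (k + d) * real CARD('n) ^ (k + d)) \<le> \<epsilon>"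
  shows "finite {i. lam i > \<epsilon>}" and "card {i. lam i > \<epsilon>} \<le> d ^ CARD('n)"
proof -
  have evd: "\<forall>\<mu>>0. finite {i. lam i = \<mu>} \<and>
      (\<forall>k. has_k_orth_eigenfuns (gaussK \<sigma> :: real^'n \<Rightarrow> real^'n \<Rightarrow> real) cube \<mu> k \<longleftrightarrow> k \<le> card {i. lam i = \<mu>})"
    using ev unfolding eigenvalue_seq_def by blast
  have fin: "card I \<le> d ^ CARD('n)" if I: "finite I" "I \<subseteq> {i. lam i > \<epsilon>}" for I
  proof -
    define Ms where "Ms = lam ` I"
    define c where "c \<mu> = card {i. lam i = \<mu>}" for \<mu>
    have Ms_pos: "\<mu> > \<epsilon>" if "\<mu> \<in> Ms" for \<mu> using that I unfolding Ms_def by auto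
    have "\<forall>\<mu>\<in>Ms. \<exists>\<phi> :: nat \<Rightarrow> real^'n \<Rightarrow> real.
        (\<forall>j<c \<mu>. L2_on cube (\<phi> j) \<and> (AE x in MC. intop (gaussK \<sigma>) cube (\<phi> j) x = \<mu> * \<phi> j x))
      \<and> (\<forall>j<c \<mu>. \<forall>l<c \<mu>. (LINT x|MC. \<phi> j x * \<phi> l x) = (if j = l then 1 else 0))"
    proof
      fix \<mu> assume "\<mu> \<in> Ms"
      then have "\<mu> > 0" using Ms_pos eps by force
      then have "has_k_orth_eigenfuns (gaussK \<sigma> :: real^'n \<Rightarrow> real^'n \<Rightarrow> real) cube \<mu> (c \<mu>)"
        using evd unfolding c_def by blast
      then show "\<exists>\<phi> :: nat \<Rightarrow> real^'n \<Rightarrow> real.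
        (\<forall>j<c \<mu>. L2_on cube (\<phi> j) \<and> (AE x in MC. intop (gaussK \<sigma>) cube (\<phi> j) x = \<mu> * \<phi> j x))
      \<and> (\<forall>j<c \<mu>. \<forall>l<c \<mu>. (LINT x|MC. \<phi> j x * \<phi> l x) = (if j = l then 1 else 0))"
        unfolding has_k_orth_eigenfuns_def by blast
    qed
    then obtain \<Phi> :: "real \<Rightarrow> nat \<Rightarrow> real^'n \<Rightarrow> real" where \<Phi>: "\<forall>\<mu>\<in>Ms.
        (\<forall>j<c \<mu>. L2_on cube (\<Phi> \<mu> j) \<and> (AE x in MC. intop (gaussK \<sigma>) cube (\<Phi> \<mu> j) x = \<mu> * \<Phi> \<mu> j x))
      \<and> (\<forall>j<c \<mu>. \<forall>l<c \<mu>. (LINT x|MC. \<Phi> \<mu> j x * \<Phi> \<mu> l x) = (if j = l then 1 else 0))"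
      by (rule bchoice[THEN exE]) blast
    define J where "J = Sigma Ms (\<lambda>\<mu>. {..<c \<mu>})"
    define \<psi> where "\<psi> p = \<Phi> (fst p) (snd p)" for p
    have fMs: "finite Ms" unfolding Ms_def using I by simp
    have fJ: "finite J" unfolding J_def using fMs by simp
    have L2: "\<forall>p\<in>J. L2_on cube (\<psi> p)" and eig: "\<forall>p\<in>J. AE x in MC. intop (gaussK \<sigma>) cube (\<psi> p) x = fst p * \<psi> p x"
      using \<Phi> unfolding J_def \<psi>_def by auto
    have gt: "\<forall>p\<in>J. fst p > \<epsilon>" unfolding J_def using Ms_pos by auto
    have on: "\<forall>p\<in>J. \<forall>q\<in>J. (LINT x|MC. \<psi> p x * \<psi> q x) = (if p = q then 1 else 0)"
    proof (intro ballI)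
      fix p q assume p: "p \<in> J" and q: "q \<in> J"
      show "(LINT x|MC. \<psi> p x * \<psi> q x) = (if p = q then 1 else 0)"
      proof (cases "fst p = fst q")
        case True
        then show ?thesis using \<Phi> p q unfolding J_def \<psi>_def by (cases p, cases q) auto
      next
        case False
        have "(LINT x|MC. \<psi> p x * \<psi> q x) = 0"
          by (rule eig_orth[of "\<psi> p" "\<psi> q" \<sigma> "fst p" "fst q"]) (use L2 eig p q False in auto)
        then show ?thesis using False by auto
      qed
    qed
    have cJ: "card J \<le> d ^ CARD('n)"
      by (rule eig_count[OF fJ L2 eig gt on tail])
    have "card I = (\<Sum>\<mu>\<in>Ms. card {i\<in>I. lam i = \<mu>})"
    proof -
      have "card I = (\<Sum>i\<in>I. (1::nat))" by simp
      also have "\<dots> = (\<Sum>\<mu>\<in>Ms. \<Sum>i\<in>{i\<in>I. lam i = \<mu>}. 1)"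
        unfolding Ms_def using I by (intro sum.group[symmetric]) auto
      finally show ?thesis by simp
    qed
    also have "\<dots> \<le> (\<Sum>\<mu>\<in>Ms. c \<mu>)"
    proof (rule sum_mono)
      fix \<mu> assume "\<mu> \<in> Ms"
      then have "\<mu> > 0" using Ms_pos eps by force
      then have "finite {i. lam i = \<mu>}" using evd by blast
      then show "card {i\<in>I. lam i = \<mu>} \<le> c \<mu>" unfolding c_def by (intro card_mono) auto
    qed
    also have "\<dots> = card J" unfolding J_def using fMs by (simp add: card_SigmaI)
    finally show ?thesis using cJ by simp
  qed
  show fS: "finite {i. lam i > \<epsilon>}"
  proof (rule ccontr)
    assume "infinite {i. lam i > \<epsilon>}"
    then obtain I where "I \<subseteq> {i. lam i > \<epsilon>}" "finite I" "card I = d ^ CARD('n) + 1"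
      using infinite_arbitrarily_large by blast
    then show False using fin by fastforce
  qed
  show "card {i. lam i > \<epsilon>} \<le> d ^ CARD('n)" by (rule fin[OF fS]) simp
qed

lemma ev1: "eventually (\<lambda>L::real. ln (ln L) / ln L \<le> 1/8) at_top" by real_asymp
lemma ev2: "eventually (\<lambda>L::real. 4*L/ln L + 1 \<le> L) at_top" by real_asymp
lemma ev3: "eventually (\<lambda>L::real. ln L > 1) at_top" by real_asymp
lemma ev4: "filterlim (\<lambda>L::real. L / ln L) at_top at_top" by real_asymp
lemma ev5: "((\<lambda>L::real. 1 / ln L) \<longlongrightarrow> 0) at_top" by real_asymp
lemma ev6: "filterlim (\<lambda>\<epsilon>::real. ln (1/\<epsilon>)) at_top (at_right 0)" by real_asymp

lemma alg1: "l \<noteq> 0 \<Longrightarrow> (4 * L / l / 2) * (A + l - B - Cc) = 2 * L - 2 * L * (B / l) + 2 * L * ((A - Cc) * (1 / l))"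
  for l L A B Cc :: real
  by (simp add: field_simps)

lemma asymL:
  fixes C b :: real
  assumes C: "C > 0"
  shows "eventually (\<lambda>L. 1 < ln L \<and> 4 * exp 1 * C \<le> 4 * L / ln L \<and> 4 * L / ln L + 1 \<le> L \<and>
            L + b \<le> (4 * L / ln L / 2) * ln ((4 * L / ln L) / (exp 1 * C))) at_top"
proof -
  define K where "K = \<bar>ln 4 - ln (exp 1 * C)\<bar>"
  have e5: "eventually (\<lambda>L::real. K * (1 / ln L) \<le> 1/8) at_top"
  proof -
    have "((\<lambda>L::real. K * (1 / ln L)) \<longlongrightarrow> K * 0) at_top" by (intro tendsto_intros ev5)
    then have "eventually (\<lambda>L::real. K * (1 / ln L) < 1/8) at_top"
      by (intro order_tendstoD(2)) auto
    then show ?thesis by (rule eventually_mono) simp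
  qed
  have e4: "eventually (\<lambda>L::real. exp 1 * C \<le> L / ln L) at_top"
    using ev4 by (simp add: filterlim_at_top)
  have e7: "eventually (\<lambda>L::real. 2 * \<bar>b\<bar> \<le> L) at_top" by (rule eventually_ge_at_top)
  have e8: "eventually (\<lambda>L::real. 0 < L) at_top" by (rule eventually_gt_at_top)
  show ?thesis
    using ev1 ev2 ev3 e4 e5 e7 e8
  proof eventually_elim
    case (elim L)
    have lL: "ln L > 1" using elim by simp
    have L0: "L > 0" using elim by simp
    have "4 * exp 1 * C \<le> 4 * L / ln L" using elim by simp
    moreover
    have "ln ((4 * L / ln L) / (exp 1 * C)) = ln 4 + ln L - ln (ln L) - ln (exp 1 * C)"
    proof -
      have lp: "ln L > 0" using lL by simp
      have p1: "4 * L / ln L > 0" "exp 1 * C > 0" "4 * L > 0" "ln L > 0"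
        using L0 lp C by (auto intro: divide_pos_pos)
      have "ln ((4 * L / ln L) / (exp 1 * C)) = ln (4 * L / ln L) - ln (exp 1 * C)"
        by (rule ln_divide_pos[OF p1(1,2)])
      also have "ln (4 * L / ln L) = ln (4 * L) - ln (ln L)" by (rule ln_divide_pos[OF p1(3,4)])
      also have "ln (4 * L) = ln 4 + ln L" using L0 by (simp add: ln_mult_pos)
      finally show ?thesis by simp
    qed
    then have "(4 * L / ln L / 2) * ln ((4 * L / ln L) / (exp 1 * C))
        = 2 * L - 2 * L * (ln (ln L) / ln L) + 2 * L * ((ln 4 - ln (exp 1 * C)) * (1 / ln L))"
      using lL alg1[of "ln L" L "ln 4" "ln (ln L)" "ln (exp 1 * C)"] by simp
    moreover have "2 * L * (ln (ln L) / ln L) \<le> 2 * L * (1/8)"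
      using elim L0 by (intro mult_left_mono) auto
    moreover have "- (2 * L * (1/8)) \<le> 2 * L * ((ln 4 - ln (exp 1 * C)) * (1 / ln L))"
    proof -
      have "\<bar>(ln 4 - ln (exp 1 * C)) * (1 / ln L)\<bar> \<le> 1/8"
        using elim lL unfolding K_def by (simp add: abs_mult)
      then have "- (1/8) \<le> (ln 4 - ln (exp 1 * C)) * (1 / ln L)" by linarith
      then have "2 * L * (- (1/8)) \<le> 2 * L * ((ln 4 - ln (exp 1 * C)) * (1 / ln L))"
        using L0 by (intro mult_left_mono) auto
      then show ?thesis by simp
    qed
    ultimately show ?case using elim by auto
  qed
qed

definition LL :: "real \<Rightarrow> real" where "LL \<epsilon> = ln (1 / \<epsilon>)"
definition dd :: "real \<Rightarrow> nat" where "dd \<epsilon> = nat \<lceil>4 * LL \<epsilon> / ln (LL \<epsilon>)\<rceil>"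

lemma key_ineq:
  fixes C D0 D L b :: real and m :: nat and \<epsilon> :: real
  assumes C: "C > 0" and D0: "4 * exp 1 * C \<le> D0" and DD: "D0 \<le> real m"
    and ineq: "L + b \<le> (D0 / 2) * ln (D0 / (exp 1 * C))"
    and eps: "\<epsilon> > 0" and L: "L = ln (1/\<epsilon>)"
  shows "exp b * sqrt (exp 1 * C / real m) ^ m \<le> \<epsilon>"
proof -
  define D where "D = real m"
  have eC: "exp 1 * C > 0" using C by simp
  have D0p: "D0 > exp 1 * C" using D0 eC by linarith
  have Dp: "D > 0" unfolding D_def using DD D0p eC by linarith
  have "(D0 / 2) * ln (D0 / (exp 1 * C)) \<le> (D / 2) * ln (D / (exp 1 * C))"
  proof (rule mult_mono)
    show "D0 / 2 \<le> D / 2" using DD unfolding D_def by simp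
    show "ln (D0 / (exp 1 * C)) \<le> ln (D / (exp 1 * C))"
      using DD D0p eC unfolding D_def by (intro ln_mono divide_right_mono) auto
    show "0 \<le> D / 2" using Dp by simp
    show "0 \<le> ln (D0 / (exp 1 * C))" using D0p eC by simp
  qed
  with ineq have I: "L + b \<le> (D / 2) * ln (D / (exp 1 * C))" by linarith
  define r where "r = sqrt (exp 1 * C / D)"
  have r0: "r > 0" unfolding r_def using eC Dp by simp
  have lr: "ln r = - ln (D / (exp 1 * C)) / 2"
  proof -
    have "ln r = ln (exp 1 * C / D) / 2" unfolding r_def using eC Dp by (simp add: ln_sqrt)
    also have "ln (exp 1 * C / D) = - ln (D / (exp 1 * C))"
      using eC Dp by (simp add: ln_divide_pos)
    finally show ?thesis by simp
  qed
  have "ln (exp b * r ^ m) = b + real m * ln r" using r0 by (simp add: ln_mult_pos ln_realpow)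
  also have "\<dots> = b - (D / 2) * ln (D / (exp 1 * C))" unfolding lr D_def by simp
  also have "\<dots> \<le> - L" using I by linarith
  also have "- L = ln \<epsilon>" unfolding L using eps by (simp add: ln_div)
  finally have "ln (exp b * r ^ m) \<le> ln \<epsilon>" .
  then have "exp b * r ^ m \<le> \<epsilon>" using r0 eps by (subst (asm) ln_le_cancel_iff) auto
  then show ?thesis unfolding r_def D_def .
qed

lemma asymE:
  fixes C b :: real
  assumes C: "C > 0"
  shows "eventually (\<lambda>\<epsilon>. 0 < \<epsilon> \<and> \<epsilon> < 1 \<and> 1 < ln (LL \<epsilon>) \<and> dd \<epsilon> > 0 \<and> 4 * exp 1 * C \<le> real (dd \<epsilon>)
            \<and> exp b * sqrt (exp 1 * C / real (dd \<epsilon>)) ^ dd \<epsilon> \<le> \<epsilon>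
            \<and> real (dd \<epsilon>) \<le> LL \<epsilon> \<and> real (dd \<epsilon>) \<le> 4 * LL \<epsilon> / ln (LL \<epsilon>) + 1) (at_right 0)"
proof -
  have e1: "eventually (\<lambda>\<epsilon>. 1 < ln (LL \<epsilon>) \<and> 4 * exp 1 * C \<le> 4 * LL \<epsilon> / ln (LL \<epsilon>) \<and> 4 * LL \<epsilon> / ln (LL \<epsilon>) + 1 \<le> LL \<epsilon> \<and>
            LL \<epsilon> + b \<le> (4 * LL \<epsilon> / ln (LL \<epsilon>) / 2) * ln ((4 * LL \<epsilon> / ln (LL \<epsilon>)) / (exp 1 * C))) (at_right 0)"
    unfolding LL_def by (rule eventually_compose_filterlim[OF asymL[OF C] ev6])
  have e2: "eventually (\<lambda>\<epsilon>::real. 0 < \<epsilon> \<and> \<epsilon> < 1) (at_right 0)"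
    by (intro eventually_conj eventually_at_right_less) (simp add: eventually_at_right_field, rule exI[of _ 1], auto)
  show ?thesis using e1 e2
  proof eventually_elim
    case (elim \<epsilon>)
    define D0 where "D0 = 4 * LL \<epsilon> / ln (LL \<epsilon>)"
    have eC: "exp 1 * C > 0" using C by simp
    have D0p: "D0 > 0" using elim eC unfolding D0_def by linarith
    have dd: "real (dd \<epsilon>) = of_int \<lceil>D0\<rceil>" unfolding dd_def D0_def[symmetric] using D0p by simp
    have a: "D0 \<le> real (dd \<epsilon>)" unfolding dd by simp
    have b: "real (dd \<epsilon>) \<le> D0 + 1" unfolding dd by (simp add: of_int_ceiling_le_add_one)
    have "exp b * sqrt (exp 1 * C / real (dd \<epsilon>)) ^ dd \<epsilon> \<le> \<epsilon>"
      by (rule key_ineq[OF C _ a _ _ LL_def]) (use elim D0_def in auto)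
    moreover have "dd \<epsilon> > 0" using a D0p by simp
    ultimately show ?case using elim a b unfolding D0_def by auto
  qed
qed

lemma h1: "(\<lambda>\<epsilon>::real. 4 * ln (1/\<epsilon>) / ln (ln (1/\<epsilon>)) + 1) \<in> O[at_right 0](\<lambda>\<epsilon>. ln (1/\<epsilon>) / ln (ln (1/\<epsilon>)))"
  by real_asymp
lemma h2: "(\<lambda>\<epsilon>::real. 4 * ln (1/(\<epsilon>/2)) / ln (ln (1/(\<epsilon>/2))) + 1) \<in> O[at_right 0](\<lambda>\<epsilon>. ln (1/\<epsilon>) / ln (ln (1/\<epsilon>)))"
  by real_asymp
lemma h3: "filterlim (\<lambda>\<epsilon>::real. \<epsilon>/2) (at_right 0) (at_right 0)"
  by real_asymp

lemma gform: "(\<lambda>\<epsilon>::real. (ln (1/\<epsilon>) / ln (ln (1/\<epsilon>))) ^ n * ln (1/\<epsilon>)) = (\<lambda>\<epsilon>. ln (1/\<epsilon>) ^ (n + 1) / (ln (ln (1/\<epsilon>))) ^ n)"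
  by (simp add: power_divide field_simps)

lemma OD1: "(\<lambda>\<epsilon>. (4 * LL \<epsilon> / ln (LL \<epsilon>) + 1) ^ n * LL \<epsilon>) \<in> O[at_right 0](\<lambda>\<epsilon>. ln (1/\<epsilon>) ^ (n + 1) / (ln (ln (1/\<epsilon>))) ^ n)"
  unfolding LL_def gform[symmetric]
  by (intro landau_o.big_mult landau_o.big_power h1) simp

lemma OD2: "(\<lambda>\<epsilon>. (4 * LL (\<epsilon>/2) / ln (LL (\<epsilon>/2)) + 1) ^ n * LL \<epsilon>) \<in> O[at_right 0](\<lambda>\<epsilon>. ln (1/\<epsilon>) ^ (n + 1) / (ln (ln (1/\<epsilon>))) ^ n)"
  unfolding LL_def gform[symmetric]
  by (intro landau_o.big_mult landau_o.big_power h2) simp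

lemma tail_link:
  fixes \<sigma> \<epsilon> :: real and d :: nat
  assumes sig: "\<sigma> > 0" and d: "d > 0" and dc: "4 * exp 1 * cb \<sigma> TYPE('n::finite) \<le> real d"
    and small: "2 ^ (CARD('n) + 3) * sqrt (exp 1 * cb \<sigma> TYPE('n) / real d) ^ d \<le> \<epsilon>"
  shows "2 ^ CARD('n) * (\<Sum>k. ak \<sigma> (k + d) * real CARD('n) ^ (k + d)) \<le> \<epsilon>"
    and "2 * sqrt (exp 1 * cb \<sigma> TYPE('n) / real d) ^ d \<le> \<epsilon> / 4"
proof -
  define c where "c = cb \<sigma> TYPE('n)"
  define r where "r = sqrt (exp 1 * c / real d)"
  define n where "n = CARD('n)"
  have c0: "c > 0" unfolding c_def by (rule cb_pos[OF sig])
  note bt = bt_tail[OF c0 d dc[folded c_def], folded r_def]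
  have r0: "r \<ge> 0" unfolding r_def using c0 by simp
  have rd: "r ^ d \<ge> 0" using r0 by simp
  have tb: "ak \<sigma> k * real n ^ k \<le> bt c k" if k: "k \<ge> d" for k
  proof -
    have b0: "bt c k \<ge> 0" using c0 by (simp add: bt_nonneg)
    have "bt c k \<le> r ^ k" unfolding r_def using c0 d k by (rule bt_le)
    also have "\<dots> \<le> 1" using r0 bt(3)[folded r_def] by (intro power_le_one) auto
    finally have b1: "bt c k \<le> 1" .
    have n1: "real n \<ge> 1" unfolding n_def by simp
    have "ak \<sigma> k * real n ^ k = (2 * \<sigma>\<^sup>2) ^ k * real n ^ k / fact k" unfolding ak_def by simp
    also have "\<dots> \<le> (2 * \<sigma>\<^sup>2) ^ k * (real n ^ 2) ^ k / fact k"
    proof -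
      have "real n ^ k \<le> (real n ^ 2) ^ k" using n1 by (intro power_mono) (auto simp: power2_eq_square)
      then show ?thesis by (intro divide_right_mono mult_left_mono) auto
    qed
    also have "\<dots> = c ^ k / fact k" unfolding c_def cb_def n_def by (simp add: power_mult_distrib)
    also have "\<dots> = (bt c k)\<^sup>2" unfolding bt_def using c0 by simp
    also have "\<dots> \<le> bt c k" using b0 b1 by (simp add: power2_eq_square mult_left_le_one_le)
    finally show ?thesis .
  qed
  have sA: "summable (\<lambda>k. ak \<sigma> k * real CARD('n) ^ k)" using ak_n_sums by (rule sums_summable)
  have sAd: "summable (\<lambda>k. ak \<sigma> (k + d) * real CARD('n) ^ (k + d))"
    using summable_ignore_initial_segment[OF sA, of d] by simp
  have sbd: "summable (\<lambda>k. bt c (k + d))" using summable_ignore_initial_segment[OF bt(1), of d] by simp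
  have "(\<Sum>k. ak \<sigma> (k + d) * real CARD('n) ^ (k + d)) \<le> (\<Sum>k. bt c (k + d))"
    by (intro suminf_le sAd sbd) (use tb in \<open>simp add: n_def\<close>)
  also have "\<dots> \<le> 2 * r ^ d" using bt(2) unfolding r_def .
  finally have "2 ^ n * (\<Sum>k. ak \<sigma> (k + d) * real CARD('n) ^ (k + d)) \<le> 2 ^ n * (2 * r ^ d)"
    by (intro mult_left_mono) auto
  also have "\<dots> \<le> 2 ^ (n + 3) * r ^ d" using rd by (simp add: power_add)
  also have "\<dots> \<le> \<epsilon>" using small unfolding r_def c_def n_def .
  finally show "2 ^ CARD('n) * (\<Sum>k. ak \<sigma> (k + d) * real CARD('n) ^ (k + d)) \<le> \<epsilon>" unfolding n_def .
  have "2 * r ^ d * 4 \<le> 2 ^ (n + 3) * r ^ d"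
  proof -
    have "(8::real) \<le> 2 ^ (n + 3)" by (simp add: power_add)
    then show ?thesis using rd by (simp add: mult_right_mono)
  qed
  then show "2 * sqrt (exp 1 * cb \<sigma> TYPE('n) / real d) ^ d \<le> \<epsilon> / 4"
    using small unfolding r_def c_def n_def by simp
qed

lemma Ecal_bound:
  assumes am: "antimono lam" and fin: "finite {i. lam i > \<epsilon>}" and eps: "\<epsilon> > 0"
  shows "0 \<le> Ecal \<epsilon> lam" and "Ecal \<epsilon> lam \<le> real (card {i. lam i > \<epsilon>}) * (\<bar>ln (lam 0)\<bar> + ln (1/\<epsilon>))"
proof -
  show "0 \<le> Ecal \<epsilon> lam" unfolding Ecal_def using eps
    by (intro sum_nonneg) (auto simp: ln_divide_pos)
  have "Ecal \<epsilon> lam \<le> (\<Sum>i\<in>{i. lam i > \<epsilon>}. \<bar>ln (lam 0)\<bar> + ln (1/\<epsilon>))"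
    unfolding Ecal_def
  proof (rule sum_mono)
    fix i assume i: "i \<in> {i. lam i > \<epsilon>}"
    have l0: "lam i \<le> lam 0" using am unfolding antimono_def by auto
    have p: "lam i > 0" "lam 0 > 0" using i eps l0 by auto
    have "ln (lam i / \<epsilon>) \<le> ln (lam 0 / \<epsilon>)" using p eps l0 by (simp add: divide_right_mono)
    also have "\<dots> = ln (lam 0) + ln (1/\<epsilon>)" using p eps by (simp add: ln_divide_pos)
    also have "\<dots> \<le> \<bar>ln (lam 0)\<bar> + ln (1/\<epsilon>)" by simp
    finally show "ln (lam i / \<epsilon>) \<le> \<bar>ln (lam 0)\<bar> + ln (1/\<epsilon>)" .
  qed
  also have "\<dots> = real (card {i. lam i > \<epsilon>}) * (\<bar>ln (lam 0)\<bar> + ln (1/\<epsilon>))" by simp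
  finally show "Ecal \<epsilon> lam \<le> real (card {i. lam i > \<epsilon>}) * (\<bar>ln (lam 0)\<bar> + ln (1/\<epsilon>))" .
qed

lemma cmult_bigo: "f \<in> O[F](g) \<Longrightarrow> (\<lambda>x. K * f x) \<in> O[F](g)" for f g :: "real \<Rightarrow> real"
proof -
  assume "f \<in> O[F](g)"
  moreover have "(\<lambda>x. K * f x) \<in> O[F](f)" by (rule bigoI[of _ "\<bar>K\<bar>"]) (simp add: abs_mult)
  ultimately show ?thesis by (rule landau_o.big_trans[rotated])
qed

lemma LL_ge1: "0 < \<epsilon> \<Longrightarrow> \<epsilon> < 1 \<Longrightarrow> 1 < ln (LL \<epsilon>) \<Longrightarrow> LL \<epsilon> \<ge> 1"
proof -
  assume a: "0 < \<epsilon>" "\<epsilon> < 1" "1 < ln (LL \<epsilon>)"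
  have "LL \<epsilon> > 0" unfolding LL_def using a by (simp add: ln_gt_zero)
  moreover have "ln (LL \<epsilon>) > 0" using a by simp
  ultimately show ?thesis by (simp add: ln_gt_zero_iff less_imp_le)
qed

theorem theorem6:
  fixes \<sigma> :: real and lam :: "nat \<Rightarrow> real"
  assumes "\<sigma> > 0"
    and "eigenvalue_seq (gaussK \<sigma> :: real^'n \<Rightarrow> real^'n \<Rightarrow> real) cube lam"
  shows "(\<forall>\<theta>. 0 < \<theta> \<and> \<theta> < 1/2 \<longrightarrow>
           (\<lambda>\<epsilon>. Ecal \<epsilon> lam + real (mcount ((1 - \<theta>) * \<epsilon>) lam) * ln (3 / \<theta>))
             \<in> O[at_right 0](\<lambda>\<epsilon>. ln (1/\<epsilon>) ^ (CARD('n) + 1) / (ln (ln (1/\<epsilon>))) ^ CARD('n)))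
       \<and> (\<lambda>\<epsilon>. entropy_C \<epsilon> (rkhs_ball (gaussK \<sigma> :: real^'n \<Rightarrow> real^'n \<Rightarrow> real) cube) cube)
             \<in> O[at_right 0](\<lambda>\<epsilon>. ln (1/\<epsilon>) ^ (CARD('n) + 1) / (ln (ln (1/\<epsilon>))) ^ CARD('n))"
proof -
  note sig = assms(1) and ev = assms(2)
  define n where "n = CARD('n)"
  define c where "c = cb \<sigma> TYPE('n)"
  have c0: "c > 0" unfolding c_def by (rule cb_pos[OF sig])
  define b :: real where "b = real (n + 3) * ln 2"
  have eb: "exp b = 2 ^ (n + 3)" unfolding b_def by (simp only: exp_of_nat_mult) simp
  define E where "E \<epsilon> \<longleftrightarrow> 0 < \<epsilon> \<and> \<epsilon> < 1 \<and> 1 < ln (LL \<epsilon>) \<and> dd \<epsilon> > 0 \<and> 4 * exp 1 * c \<le> real (dd \<epsilon>)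
            \<and> exp b * sqrt (exp 1 * c / real (dd \<epsilon>)) ^ dd \<epsilon> \<le> \<epsilon>
            \<and> real (dd \<epsilon>) \<le> LL \<epsilon> \<and> real (dd \<epsilon>) \<le> 4 * LL \<epsilon> / ln (LL \<epsilon>) + 1" for \<epsilon>
  have evE: "eventually E (at_right 0)" unfolding E_def by (rule asymE[OF c0])
  have evE2: "eventually (\<lambda>\<epsilon>. E (\<epsilon>/2)) (at_right 0)" by (rule eventually_compose_filterlim[OF evE h3])
  define D1 where "D1 \<epsilon> = 4 * LL \<epsilon> / ln (LL \<epsilon>) + 1" for \<epsilon>
  have am: "antimono lam" using ev unfolding eigenvalue_seq_def by blast
  have Ecns: "finite {i. lam i > \<epsilon>} \<and> card {i. lam i > \<epsilon>} \<le> dd \<epsilon> ^ n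
      \<and> 2 * sqrt (exp 1 * c / real (dd \<epsilon>)) ^ dd \<epsilon> \<le> \<epsilon> / 4
      \<and> real (dd \<epsilon>) ^ n \<le> D1 \<epsilon> ^ n \<and> LL \<epsilon> \<ge> 1" if "E \<epsilon>" for \<epsilon>
  proof -
    have e: "0 < \<epsilon>" "\<epsilon> < 1" "1 < ln (LL \<epsilon>)" "dd \<epsilon> > 0" "4 * exp 1 * cb \<sigma> TYPE('n) \<le> real (dd \<epsilon>)"
      "2 ^ (CARD('n) + 3) * sqrt (exp 1 * cb \<sigma> TYPE('n) / real (dd \<epsilon>)) ^ dd \<epsilon> \<le> \<epsilon>"
      "real (dd \<epsilon>) \<le> D1 \<epsilon>"
      using that unfolding E_def eb c_def n_def D1_def by auto
    note tl = tail_link[OF sig e(4) e(5) e(6)]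
    have mb: "finite {i. lam i > \<epsilon>}" "card {i. lam i > \<epsilon>} \<le> dd \<epsilon> ^ n"
      using mcount_bound[OF ev e(1) tl(1)] unfolding n_def by auto
    have "real (dd \<epsilon>) ^ n \<le> D1 \<epsilon> ^ n" using e(7) by (intro power_mono) auto
    then show ?thesis using mb tl(2) LL_ge1[OF e(1-3)] unfolding c_def by auto
  qed
  have part1: "(\<lambda>\<epsilon>. Ecal \<epsilon> lam + real (mcount ((1 - \<theta>) * \<epsilon>) lam) * ln (3 / \<theta>))
             \<in> O[at_right 0](\<lambda>\<epsilon>. ln (1/\<epsilon>) ^ (n + 1) / (ln (ln (1/\<epsilon>))) ^ n)"
    if th: "0 < \<theta>" "\<theta> < 1/2" for \<theta>
  proof -
    define K1 where "K1 = \<bar>ln (lam 0)\<bar> + 1"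
    define K2 where "K2 = ln (3 / \<theta>)"
    have K2p: "K2 \<ge> 0" unfolding K2_def using th by simp
    define F where "F \<epsilon> = K1 * (D1 \<epsilon> ^ n * LL \<epsilon>) + K2 * ((4 * LL (\<epsilon>/2) / ln (LL (\<epsilon>/2)) + 1) ^ n * LL \<epsilon>)" for \<epsilon>
    have "eventually (\<lambda>\<epsilon>. norm (Ecal \<epsilon> lam + real (mcount ((1 - \<theta>) * \<epsilon>) lam) * ln (3 / \<theta>)) \<le> 1 * norm (F \<epsilon>)) (at_right 0)"
      using evE evE2
    proof eventually_elim
      case (elim \<epsilon>)
      note c1 = Ecns[OF elim(1)] and c2 = Ecns[OF elim(2)]
      have ep: "\<epsilon> > 0" "\<epsilon> / 2 > 0" using elim unfolding E_def by auto
      have D2: "real (dd (\<epsilon>/2)) ^ n \<le> (4 * LL (\<epsilon>/2) / ln (LL (\<epsilon>/2)) + 1) ^ n" using c2 unfolding D1_def by simp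
      have Eb: "0 \<le> Ecal \<epsilon> lam" "Ecal \<epsilon> lam \<le> real (card {i. lam i > \<epsilon>}) * (\<bar>ln (lam 0)\<bar> + ln (1/\<epsilon>))"
        using Ecal_bound[OF am _ ep(1)] c1 by auto
      have LLe: "ln (1/\<epsilon>) = LL \<epsilon>" unfolding LL_def ..
      have L1: "LL \<epsilon> \<ge> 1" using c1 by simp
      have "Ecal \<epsilon> lam \<le> real (card {i. lam i > \<epsilon>}) * (K1 * LL \<epsilon>)"
      proof -
        have "\<bar>ln (lam 0)\<bar> + ln (1/\<epsilon>) \<le> K1 * LL \<epsilon>" unfolding K1_def LLe
          using mult_left_mono[of 1 "LL \<epsilon>" "\<bar>ln (lam 0)\<bar>"] L1 by (simp add: algebra_simps)
        then have "real (card {i. lam i > \<epsilon>}) * (\<bar>ln (lam 0)\<bar> + ln (1/\<epsilon>)) \<le> real (card {i. lam i > \<epsilon>}) * (K1 * LL \<epsilon>)"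
          by (intro mult_left_mono) auto
        then show ?thesis using Eb(2) by linarith
      qed
      also have "\<dots> \<le> D1 \<epsilon> ^ n * (K1 * LL \<epsilon>)"
      proof -
        have "real (card {i. lam i > \<epsilon>}) \<le> real (dd \<epsilon> ^ n)" using c1 by (simp only: of_nat_le_iff)
        then have "real (card {i. lam i > \<epsilon>}) \<le> real (dd \<epsilon>) ^ n" by simp
        also have "\<dots> \<le> D1 \<epsilon> ^ n" using c1 by simp
        finally show ?thesis using L1 by (intro mult_right_mono) (auto simp: K1_def)
      qed
      finally have A: "Ecal \<epsilon> lam \<le> K1 * (D1 \<epsilon> ^ n * LL \<epsilon>)" by (simp add: algebra_simps)
      have mc: "mcount ((1 - \<theta>) * \<epsilon>) lam \<le> card {i. lam i > \<epsilon>/2}"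
      proof -
        have "(1/2) * \<epsilon> \<le> (1 - \<theta>) * \<epsilon>" using th ep by (intro mult_right_mono) auto
        then have "{i. lam i > (1 - \<theta>) * \<epsilon>} \<subseteq> {i. lam i > \<epsilon>/2}" by auto
        then show ?thesis unfolding mcount_def using c2 by (intro card_mono) auto
      qed
      have "real (mcount ((1 - \<theta>) * \<epsilon>) lam) * ln (3 / \<theta>) \<le> real (dd (\<epsilon>/2)) ^ n * K2"
      proof -
        have "real (mcount ((1 - \<theta>) * \<epsilon>) lam) \<le> real (dd (\<epsilon>/2)) ^ n"
        proof -
          have "mcount ((1 - \<theta>) * \<epsilon>) lam \<le> dd (\<epsilon>/2) ^ n" using mc c2 by linarith
          then have "real (mcount ((1 - \<theta>) * \<epsilon>) lam) \<le> real (dd (\<epsilon>/2) ^ n)" by (simp only: of_nat_le_iff)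
          then show ?thesis by simp
        qed
        then show ?thesis unfolding K2_def using K2p[unfolded K2_def] by (intro mult_right_mono)
      qed
      also have "\<dots> \<le> (4 * LL (\<epsilon>/2) / ln (LL (\<epsilon>/2)) + 1) ^ n * K2"
        using D2 K2p by (intro mult_right_mono)
      also have "\<dots> \<le> (4 * LL (\<epsilon>/2) / ln (LL (\<epsilon>/2)) + 1) ^ n * K2 * LL \<epsilon>"
      proof -
        have "0 \<le> real (dd (\<epsilon>/2)) ^ n" by simp
        then have "0 \<le> (4 * LL (\<epsilon>/2) / ln (LL (\<epsilon>/2)) + 1) ^ n" using D2 by linarith
        then have "0 \<le> (4 * LL (\<epsilon>/2) / ln (LL (\<epsilon>/2)) + 1) ^ n * K2" using K2p by simp
        then show ?thesis using mult_left_mono[OF L1] by (metis mult.right_neutral)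
      qed
      finally have B: "real (mcount ((1 - \<theta>) * \<epsilon>) lam) * ln (3 / \<theta>) \<le> K2 * ((4 * LL (\<epsilon>/2) / ln (LL (\<epsilon>/2)) + 1) ^ n * LL \<epsilon>)"
        by (simp add: algebra_simps)
      have nn: "0 \<le> Ecal \<epsilon> lam + real (mcount ((1 - \<theta>) * \<epsilon>) lam) * ln (3 / \<theta>)"
        using Eb(1) K2p unfolding K2_def by simp
      show ?case using A B nn unfolding F_def by simp
    qed
    then have "(\<lambda>\<epsilon>. Ecal \<epsilon> lam + real (mcount ((1 - \<theta>) * \<epsilon>) lam) * ln (3 / \<theta>)) \<in> O[at_right 0](F)"
      by (rule bigoI)
    moreover have "F \<in> O[at_right 0](\<lambda>\<epsilon>. ln (1/\<epsilon>) ^ (n + 1) / (ln (ln (1/\<epsilon>))) ^ n)"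
      unfolding F_def[abs_def] D1_def by (intro sum_in_bigo(1) cmult_bigo OD1 OD2)
    ultimately show ?thesis by (rule landau_o.big_trans)
  qed
  have part2: "(\<lambda>\<epsilon>. entropy_C \<epsilon> (rkhs_ball (gaussK \<sigma> :: real^'n \<Rightarrow> real^'n \<Rightarrow> real) cube) cube)
             \<in> O[at_right 0](\<lambda>\<epsilon>. ln (1/\<epsilon>) ^ (n + 1) / (ln (ln (1/\<epsilon>))) ^ n)"
  proof -
    define Cs where "Cs = (\<Sum>k. bt (cb \<sigma> TYPE('n)) k)"
    define K0 where "K0 = ln (8 * Cs + 2)"
    have sb: "summable (bt (cb \<sigma> TYPE('n)))"
    proof -
      have "4 * exp 1 * c \<le> real (nat \<lceil>4 * exp 1 * c\<rceil>)" by (rule real_nat_ceiling_ge)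
      then show ?thesis
        using bt_tail(1)[OF c0[unfolded c_def], of "nat \<lceil>4 * exp 1 * c\<rceil> + 1"] by (simp add: c_def)
    qed
    have Cs0: "Cs \<ge> 0" unfolding Cs_def using sb c0[unfolded c_def] by (intro suminf_nonneg) (auto intro: bt_nonneg less_imp_le)
    have K00: "K0 \<ge> 0" unfolding K0_def using Cs0 by simp
    have "eventually (\<lambda>\<epsilon>. norm (entropy_C \<epsilon> (rkhs_ball (gaussK \<sigma> :: real^'n \<Rightarrow> real^'n \<Rightarrow> real) cube) cube)
            \<le> (K0 + real n + 1) * norm (D1 \<epsilon> ^ n * LL \<epsilon>)) (at_right 0)"
      using evE
    proof eventually_elim
      case (elim \<epsilon>)
      note c1 = Ecns[OF elim]
      have e: "0 < \<epsilon>" "\<epsilon> < 1" "dd \<epsilon> > 0" "4 * exp 1 * cb \<sigma> TYPE('n) \<le> real (dd \<epsilon>)" "real (dd \<epsilon>) \<le> LL \<epsilon>"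
        using elim unfolding E_def c_def by auto
      have sm: "2 * sqrt (exp 1 * cb \<sigma> TYPE('n) / real (dd \<epsilon>)) ^ dd \<epsilon> \<le> \<epsilon> / 4" using c1 unfolding c_def by simp
      note eb = entropy_bound[OF sig e(1) e(3) e(4) sm]
      define d where "d = real (dd \<epsilon>)"
      define L where "L = LL \<epsilon>"
      have L1: "L \<ge> 1" using c1 unfolding L_def by simp
      have d0: "d \<ge> 0" unfolding d_def by simp
      have dL: "d ^ n \<le> L ^ n" using e(5) d0 unfolding d_def L_def by (intro power_mono) auto
      have Ln1: "L ^ n \<ge> 1" using L1 by simp
      have ie: "1 / \<epsilon> \<ge> 1" using e by simp
      have "8 * Cs * d ^ n / \<epsilon> + 2 \<le> (8 * Cs + 2) * (L ^ n * (1 / \<epsilon>))"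
      proof -
        have "8 * Cs * d ^ n / \<epsilon> \<le> 8 * Cs * (L ^ n * (1 / \<epsilon>))"
          using dL Cs0 e by (simp add: divide_right_mono mult_left_mono)
        moreover have "2 \<le> 2 * (L ^ n * (1 / \<epsilon>))"
        proof -
          have "1 * 1 \<le> L ^ n * (1 / \<epsilon>)" using Ln1 ie by (intro mult_mono) auto
          then show ?thesis by simp
        qed
        ultimately show ?thesis by (simp add: algebra_simps)
      qed
      then have "ln (8 * Cs * d ^ n / \<epsilon> + 2) \<le> ln ((8 * Cs + 2) * (L ^ n * (1 / \<epsilon>)))"
      proof (rule ln_mono)
        have "0 \<le> 8 * Cs * d ^ n / \<epsilon>" using Cs0 e d0 by simp
        then show "0 < 8 * Cs * d ^ n / \<epsilon> + 2" by linarith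
      qed
      also have "\<dots> = K0 + real n * ln L + L"
      proof -
        have p: "8 * Cs + 2 > 0" "L ^ n > 0" "1 / \<epsilon> > 0" using Cs0 L1 e by auto
        have "ln ((8 * Cs + 2) * (L ^ n * (1 / \<epsilon>))) = ln (8 * Cs + 2) + (ln (L ^ n) + ln (1 / \<epsilon>))"
          using p by (simp only: ln_mult_pos mult_pos_pos)
        also have "ln (L ^ n) = real n * ln L" by (rule ln_realpow)
        also have "ln (1 / \<epsilon>) = L" unfolding L_def LL_def ..
        finally show ?thesis unfolding K0_def by simp
      qed
      also have "\<dots> \<le> K0 + real n * L + L" using L1 ln_bound[of L] by (simp add: mult_left_mono)
      also have "\<dots> \<le> (K0 + real n + 1) * L" using L1 K00 mult_left_mono[of 1 L K0] by (simp add: algebra_simps)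
      finally have lnb: "ln (8 * Cs * d ^ n / \<epsilon> + 2) \<le> (K0 + real n + 1) * L" .
      have ent: "entropy_C \<epsilon> (rkhs_ball (gaussK \<sigma> :: real^'n \<Rightarrow> real^'n \<Rightarrow> real) cube) cube \<le> d ^ n * ln (8 * Cs * d ^ n / \<epsilon> + 2)"
        using eb(2) unfolding d_def Cs_def n_def .
      also have "\<dots> \<le> D1 \<epsilon> ^ n * ((K0 + real n + 1) * L)"
      proof (rule mult_mono)
        show "d ^ n \<le> D1 \<epsilon> ^ n" using c1 unfolding d_def by simp
        show "ln (8 * Cs * d ^ n / \<epsilon> + 2) \<le> (K0 + real n + 1) * L" by (rule lnb)
        show "0 \<le> D1 \<epsilon> ^ n" using c1 zero_le_power[OF d0, of n] unfolding d_def by linarith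
        show "0 \<le> ln (8 * Cs * d ^ n / \<epsilon> + 2)" using Cs0 e d0 by simp
      qed
      finally have "entropy_C \<epsilon> (rkhs_ball (gaussK \<sigma> :: real^'n \<Rightarrow> real^'n \<Rightarrow> real) cube) cube \<le> (K0 + real n + 1) * (D1 \<epsilon> ^ n * L)"
        by (simp add: algebra_simps)
      moreover have "0 \<le> entropy_C \<epsilon> (rkhs_ball (gaussK \<sigma> :: real^'n \<Rightarrow> real^'n \<Rightarrow> real) cube) cube" by (rule eb(1))
      moreover have "0 \<le> D1 \<epsilon> ^ n * L"
      proof -
        have "0 \<le> D1 \<epsilon> ^ n" using c1 zero_le_power[OF d0, of n] unfolding d_def by linarith
        then show ?thesis using L1 by simp
      qed
      ultimately show ?case unfolding L_def by simp
    qed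
    then have "(\<lambda>\<epsilon>. entropy_C \<epsilon> (rkhs_ball (gaussK \<sigma> :: real^'n \<Rightarrow> real^'n \<Rightarrow> real) cube) cube) \<in> O[at_right 0](\<lambda>\<epsilon>. D1 \<epsilon> ^ n * LL \<epsilon>)"
      by (rule bigoI)
    moreover have "(\<lambda>\<epsilon>. D1 \<epsilon> ^ n * LL \<epsilon>) \<in> O[at_right 0](\<lambda>\<epsilon>. ln (1/\<epsilon>) ^ (n + 1) / (ln (ln (1/\<epsilon>))) ^ n)"
      unfolding D1_def by (rule OD1)
    ultimately show ?thesis by (rule landau_o.big_trans)
  qed
  show ?thesis using part1 part2 unfolding n_def by blast
qed

end
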